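(* Let $T=T_\lambda(r,m)$ act linearly and inner faithfully on $\Bbbk\overline{Q}$ ($n\ge 3$) so that $g$ acts by a reflection: there are an integer $d$ with $0<d\le n-1$ and scalars $\mu_i,\mu_i^*\in\Bbbk^\times$ with $$g\cdot e_i=e_{n-(d+i)},\qquad g\cdot a_i=\mu_i a^*_{n-(d+i+1)},\qquad g\cdot a_i^*=\mu_i^*a_{n-(d+i+1)}\quad(0\le i\le n-1),$$ and suppose this action descends to an action on $\Pi_Q$. Then $r=2$ (so $\lambda=-1$), and: (1) $\mu_i^*=\mu_i^{-1}$ for all $i$, i.e. $g\cdot a_i=\mu_i a^*_{n-(d+i+1)}$ and $g\cdot a_i^*=\mu_i^{-1}a_{n-(d+i+1)}$, and $(\mu_i\mu_{n-(d+i+1)}^{-1})^{m/2}=1$ for all $i$. (2) $x\cdot e_i=\gamma_i(e_i+e_{n-(d+i)})$, where the $\gamma_i$ satisfy $\gamma_i=-\gamma_{n-(d+i)}$ (so $\gamma_j=0$ whenever $g\cdot j=j$) and $\gamma_{i+1}^2=\mu_i\mu_{n-(d+i+1)}^{-1}\gamma_i^2$ for every $i$ such that neither $i$ nor $i+1$ is a vertex fixed by $g$. (3) For all $i$, $$x\cdot a_i=\gamma_{i+1}a_i+\gamma_i\mu_i a^*_{n-(d+i+1)}+\sigma(a_i),\qquad x\cdot a_i^*=\gamma_i a_i^*+\gamma_{i+1}\mu_i^{-1}a_{n-(d+i+1)}+\sigma(a_i^* ),$$ where the quiver-Taft map $\sigma$ satisfies: - if $j$ is a vertex with $g\cdot j=j$,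 then there is a scalar $c_j$ with $c_j=\pm\gamma_{j-1}\sqrt{\mu_j\mu_{j-1}}$ (i.e. $c_j^2=\mu_j\mu_{j-1}\gamma_{j-1}^2$) such that $\sigma(a_{j-1})=\mu_j^{-1}c_j a_{j-1}$, $\sigma(a_j)=c_j a_{j-1}^*$, $\sigma(a_{j-1}^* )=-(\mu_j\mu_{j-1})^{-1}c_j a_j$, $\sigma(a_j^* )=-\mu_j^{-1}c_j a_j^*$; - if $k$ is a vertex with $g\cdot k=k+1$ and $g\cdot(k+1)=k$, then there is a scalar $c_k$ with $\sigma(a_k)=c_k e_k$ and $\sigma(a_k^* )=-\mu_k^{-1}c_k e_{k+1}$; moreover, if $\gamma_i=0$ for all $i$, then $c_k\ne 0$ for some such $k$; - if $i$ is neither $j-1$ nor $j$ for a vertex $j$ fixed by $g$, nor a vertex $k$ with $g\cdot k=k+1$, then $\sigma(a_i)=\sigma(a_i^* )=0$.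
   Context: Let $\Bbbk$ be a field, $r>1$ and $m$ positive integers with $r\mid m$, and $\lambda\in\Bbbk$ a primitive $r$-th root of unity, with $r$ coprime to the characteristic of $\Bbbk$. The generalized Taft algebra $T=T_\lambda(r,m)$ is the Hopf algebra generated by $g,x$ with relations $gx=\lambda xg$, $g^m=1$, $x^r=0$, coproduct $\Delta(g)=g\otimes g$, $\Delta(x)=1\otimes x+x\otimes g$, counit $\varepsilon(g)=1,\varepsilon(x)=0$, antipode $S(g)=g^{-1}$, $S(x)=-xg^{-1}$. An action of $T$ on an algebra $A$ is a $T$-module algebra structure ($h\cdot(ab)=\sum (h_{(1)}\cdot a)(h_{(2)}\cdot b)$, $h\cdot 1=\varepsilon(h)1$); so $g$ acts by an algebra automorphism and $x\cdot(ab)=a(x\cdot b)+(x\cdot a)(g\cdot b)$. It is inner faithful if no nonzero Hopf ideal $I$ of $T$ satisfies $I\cdot A=0$. Fix $n\ge3$; vertex indices are taken modulo $n$. $\overline{Q}$ is the quiver with vertices $0,\dots,n-1$ and arrows $a_i:i\to i+1$, $a_i^*:i+1\to i$. In the path algebra $\Bbbk\overline{Q}$, $e_i$ is the trivial path at $i$, $s(a),t(a)$ are source and target, and $pq$ is the concatenation ($p$ then $q$) if $t(p)=s(q)$, else $0$. The preprojective algebra is $\Pi_Q=\Bbbk\overline{Q}/(\Omega)$ where $(\Omega)$ is the ideal generated by $a_i^*a_i-a_{i+1}a_{i+1}^*$, $0\le i\le n-1$. The action descends to $\Pi_Q$ if $(\Omega)$ is stable under $g$ and $x$, so that an action on $\Pi_Q$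 is induced. A linear action of $T$ on $\Bbbk\overline{Q}$: $g$ acts by a path-length-preserving automorphism (permuting vertices, $g\cdot e_i=e_{g\cdot i}$) and $x$ maps the span of vertices to itself and arrows into the span of vertices and arrows. For such an action there are scalars $\gamma_i$ with $x\cdot e_i=\gamma_i e_i-\gamma_i\lambda^{-1}e_{g\cdot i}$. The quiver-Taft map $\sigma$ is the linear map on the span of vertices and arrows with $\sigma(e_i)=0$ and $\sigma(a)=x\cdot a-\gamma_{t(a)}a+\gamma_{s(a)}\lambda^{-1}(g\cdot a)$ for each arrow $a$. *)

theory Defs
  imports Main
begin

section \<open>The doubled cyclic quiver and its path algebra\<close>

text \<open>Vertices are 0..n-1 (indices mod n). Arrows: Arr i = a_i : i -> i+1,
  Star i = a_i^* : i+1 -> i.\<close>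

datatype arr = Arr nat | Star nat

definition suc_v :: "nat \<Rightarrow> nat \<Rightarrow> nat" where
  "suc_v n i = (i + 1) mod n"

definition pre_v :: "nat \<Rightarrow> nat \<Rightarrow> nat" where
  "pre_v n i = (i + n - 1) mod n"

fun arr_idx :: "arr \<Rightarrow> nat" where
  "arr_idx (Arr i) = i" | "arr_idx (Star i) = i"

fun src :: "nat \<Rightarrow> arr \<Rightarrow> nat" where
  "src n (Arr i) = i" | "src n (Star i) = suc_v n i"

fun tgt :: "nat \<Rightarrow> arr \<Rightarrow> nat" where
  "tgt n (Arr i) = suc_v n i" | "tgt n (Star i) = i"

text \<open>A path is a start vertex together with a (possibly empty) list of composable
  arrows; (i, []) is the trivial path e_i.\<close>

type_synonym path = "nat \<times> arr list"

fun path_ok :: "nat \<Rightarrow> path \<Rightarrow> bool" where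
  "path_ok n (v, []) = (v < n)"
| "path_ok n (v, a # as) = (arr_idx a < n \<and> v < n \<and> src n a = v \<and> path_ok n (tgt n a, as))"

fun ptgt :: "nat \<Rightarrow> path \<Rightarrow> nat" where
  "ptgt n (v, []) = v"
| "ptgt n (v, a # as) = ptgt n (tgt n a, as)"

definition pcat :: "nat \<Rightarrow> path \<Rightarrow> path \<Rightarrow> path option" where
  "pcat n p q = (if ptgt n p = fst q then Some (fst p, snd p @ snd q) else None)"

type_synonym 'k pa = "path \<Rightarrow> 'k"

definition PA :: "nat \<Rightarrow> ('k::field) pa set" where
  "PA n = {f. finite {p. f p \<noteq> 0} \<and> (\<forall>p. f p \<noteq> 0 \<longrightarrow> path_ok n p)}"

definition pzero :: "('k::field) pa" where
  "pzero = (\<lambda>_. 0)"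

definition padd :: "('k::field) pa \<Rightarrow> 'k pa \<Rightarrow> 'k pa" where
  "padd f h = (\<lambda>p. f p + h p)"

definition psc :: "'k::field \<Rightarrow> 'k pa \<Rightarrow> 'k pa" where
  "psc c f = (\<lambda>p. c * f p)"

definition psum_list :: "('k::field) pa list \<Rightarrow> 'k pa" where
  "psum_list fs = foldr padd fs pzero"

definition pmul :: "nat \<Rightarrow> ('k::field) pa \<Rightarrow> 'k pa \<Rightarrow> 'k pa" where
  "pmul n f h = (\<lambda>w. \<Sum>(p, q) \<in> {(p, q). f p \<noteq> 0 \<and> h q \<noteq> 0 \<and> pcat n p q = Some w}. f p * h q)"

definition bas :: "path \<Rightarrow> ('k::field) pa" where
  "bas p = (\<lambda>q. if q = p then 1 else 0)"

definition pone :: "nat \<Rightarrow> ('k::field) pa" where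
  "pone n = (\<lambda>p. if (\<exists>i<n. p = (i, [])) then 1 else 0)"

definition ev :: "nat \<Rightarrow> ('k::field) pa" where
  "ev i = bas (i, [])"

definition arrv :: "nat \<Rightarrow> arr \<Rightarrow> ('k::field) pa" where
  "arrv n a = bas (src n a, [a])"

abbreviation av :: "nat \<Rightarrow> nat \<Rightarrow> ('k::field) pa" where
  "av n i \<equiv> arrv n (Arr i)"

abbreviation asv :: "nat \<Rightarrow> nat \<Rightarrow> ('k::field) pa" where
  "asv n i \<equiv> arrv n (Star i)"

definition vert_span :: "nat \<Rightarrow> ('k::field) pa set" where
  "vert_span n = {f \<in> PA n. \<forall>p. f p \<noteq> 0 \<longrightarrow> snd p = []}"

definition vert_arr_span :: "nat \<Rightarrow> ('k::field) pa set" where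
  "vert_arr_span n = {f \<in> PA n. \<forall>p. f p \<noteq> 0 \<longrightarrow> length (snd p) \<le> 1}"

definition prel :: "nat \<Rightarrow> nat \<Rightarrow> ('k::field) pa" where
  "prel n i = padd (pmul n (asv n i) (av n i))
                   (psc (-1) (pmul n (av n (suc_v n i)) (asv n (suc_v n i))))"

definition omega_ideal :: "nat \<Rightarrow> ('k::field) pa set" where
  "omega_ideal n = {F. \<exists>l :: ('k pa \<times> nat \<times> 'k pa) list.
       (\<forall>(u, i, v) \<in> set l. u \<in> PA n \<and> v \<in> PA n \<and> i < n) \<and>
       F = psum_list (map (\<lambda>(u, i, v). pmul n (pmul n u (prel n i)) v) l)}"

section \<open>The generalized Taft algebra T_lambda(r, m)\<close>

text \<open>Elements of T are functions on basis indices (a, b) standing for g^a x^b,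
  a < m, b < r.\<close>

type_synonym 'k taft = "nat \<times> nat \<Rightarrow> 'k"
type_synonym 'k taft2 = "(nat \<times> nat) \<times> (nat \<times> nat) \<Rightarrow> 'k"

definition Tidx :: "nat \<Rightarrow> nat \<Rightarrow> (nat \<times> nat) set" where
  "Tidx m r = {..<m} \<times> {..<r}"

definition Tcar :: "nat \<Rightarrow> nat \<Rightarrow> ('k::field) taft set" where
  "Tcar m r = {h. \<forall>z. h z \<noteq> 0 \<longrightarrow> z \<in> Tidx m r}"

definition tdelta :: "nat \<times> nat \<Rightarrow> ('k::field) taft" where
  "tdelta z = (\<lambda>w. if w = z then 1 else 0)"

text \<open>Structure constants: g^a1 x^b1 g^a2 x^b2 = lambda^(-b1 a2) g^(a1+a2) x^(b1+b2),
  using g x = lambda x g, g^m = 1, x^r = 0.\<close>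
definition tcoef :: "'k::field \<Rightarrow> nat \<Rightarrow> nat \<Rightarrow> nat \<times> nat \<Rightarrow> nat \<times> nat \<Rightarrow> nat \<times> nat \<Rightarrow> 'k" where
  "tcoef lam m r z1 z2 z =
     (if (fst z1 + fst z2) mod m = fst z \<and> snd z1 + snd z2 = snd z \<and> snd z < r
      then inverse lam ^ (snd z1 * fst z2) else 0)"

definition tmul :: "'k::field \<Rightarrow> nat \<Rightarrow> nat \<Rightarrow> 'k taft \<Rightarrow> 'k taft \<Rightarrow> 'k taft" where
  "tmul lam m r h1 h2 = (\<lambda>z. \<Sum>z1 \<in> Tidx m r. \<Sum>z2 \<in> Tidx m r. h1 z1 * h2 z2 * tcoef lam m r z1 z2 z)"

definition tone :: "('k::field) taft" where
  "tone = tdelta (0, 0)"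

definition tpow :: "'k::field \<Rightarrow> nat \<Rightarrow> nat \<Rightarrow> 'k taft \<Rightarrow> nat \<Rightarrow> 'k taft" where
  "tpow lam m r h k = ((tmul lam m r h) ^^ k) tone"

definition ttensor :: "('k::field) taft \<Rightarrow> 'k taft \<Rightarrow> 'k taft2" where
  "ttensor u v = (\<lambda>(p, q). u p * v q)"

definition ttmul :: "'k::field \<Rightarrow> nat \<Rightarrow> nat \<Rightarrow> 'k taft2 \<Rightarrow> 'k taft2 \<Rightarrow> 'k taft2" where
  "ttmul lam m r F H = (\<lambda>(p, q). \<Sum>p1 \<in> Tidx m r. \<Sum>q1 \<in> Tidx m r. \<Sum>p2 \<in> Tidx m r. \<Sum>q2 \<in> Tidx m r.
       F (p1, q1) * H (p2, q2) * tcoef lam m r p1 p2 p * tcoef lam m r q1 q2 q)"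

definition ttpow :: "'k::field \<Rightarrow> nat \<Rightarrow> nat \<Rightarrow> 'k taft2 \<Rightarrow> nat \<Rightarrow> 'k taft2" where
  "ttpow lam m r F k = ((ttmul lam m r F) ^^ k) (ttensor tone tone)"

text \<open>Coproduct: Delta(g) = g (x) g, Delta(x) = 1 (x) x + x (x) g, extended multiplicatively.\<close>
definition tDelta :: "'k::field \<Rightarrow> nat \<Rightarrow> nat \<Rightarrow> 'k taft \<Rightarrow> 'k taft2" where
  "tDelta lam m r h = (\<lambda>w. \<Sum>z \<in> Tidx m r. h z *
      ttmul lam m r (ttpow lam m r (ttensor (tdelta (1, 0)) (tdelta (1, 0))) (fst z))
                    (ttpow lam m r (\<lambda>w'. ttensor (tdelta (0, 0)) (tdelta (0, 1)) w'
                                       + ttensor (tdelta (0, 1)) (tdelta (1, 0)) w') (snd z)) w)"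

definition teps :: "nat \<Rightarrow> nat \<Rightarrow> ('k::field) taft \<Rightarrow> 'k" where
  "teps m r h = (\<Sum>a<m. h (a, 0))"

text \<open>Antipode: S(g) = g^(-1) = g^(m-1), S(x) = - x g^(-1), antimultiplicative:
  S(g^a x^b) = S(x)^b S(g)^a.\<close>
definition tS :: "'k::field \<Rightarrow> nat \<Rightarrow> nat \<Rightarrow> 'k taft \<Rightarrow> 'k taft" where
  "tS lam m r h = (\<lambda>w. \<Sum>z \<in> Tidx m r. h z *
      tmul lam m r (tpow lam m r (\<lambda>w'. - tmul lam m r (tdelta (0, 1)) (tdelta (m - 1, 0)) w') (snd z))
                   (tpow lam m r (tdelta (m - 1, 0)) (fst z)) w)"

definition lspan :: "('a \<Rightarrow> 'k::field) set \<Rightarrow> ('a \<Rightarrow> 'k) set" where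
  "lspan S = {F. \<exists>l :: ('k \<times> ('a \<Rightarrow> 'k)) list. set (map snd l) \<subseteq> S \<and>
                 F = (\<lambda>z. sum_list (map (\<lambda>(c, u). c * u z) l))}"

definition hopf_ideal :: "'k::field \<Rightarrow> nat \<Rightarrow> nat \<Rightarrow> 'k taft set \<Rightarrow> bool" where
  "hopf_ideal lam m r I \<longleftrightarrow>
     I \<subseteq> Tcar m r \<and> (\<lambda>_. 0) \<in> I \<and>
     (\<forall>h\<in>I. \<forall>h'\<in>I. (\<lambda>z. h z + h' z) \<in> I) \<and>
     (\<forall>c. \<forall>h\<in>I. (\<lambda>z. c * h z) \<in> I) \<and>
     (\<forall>h\<in>I. \<forall>t\<in>Tcar m r. tmul lam m r h t \<in> I \<and> tmul lam m r t h \<in> I) \<and>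
     (\<forall>h\<in>I. teps m r h = 0) \<and>
     (\<forall>h\<in>I. tDelta lam m r h \<in>
        lspan ({ttensor u v | u v. u \<in> I \<and> v \<in> Tcar m r} \<union>
               {ttensor u v | u v. u \<in> Tcar m r \<and> v \<in> I})) \<and>
     (\<forall>h\<in>I. tS lam m r h \<in> I)"

section \<open>Actions of T on the path algebra\<close>

text \<open>A T-action is given by the operators G (action of g) and X (action of x);
  a general element h = sum h(a,b) g^a x^b acts by sum h(a,b) G^a X^b.\<close>
definition tact :: "nat \<Rightarrow> nat \<Rightarrow> ('k::field pa \<Rightarrow> 'k pa) \<Rightarrow> ('k pa \<Rightarrow> 'k pa) \<Rightarrow> 'k taft \<Rightarrow> 'k pa \<Rightarrow> 'k pa" where
  "tact m r G X h f = (\<lambda>p. \<Sum>z \<in> Tidx m r. h z * (G ^^ fst z) ((X ^^ snd z) f) p)"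

text \<open>T-module algebra structure on k Q-bar: G, X linear on the path algebra,
  satisfying the defining relations of T (g x = lambda x g, g^m = 1, x^r = 0),
  and h.(ab) = h_(1).a h_(2).b, h.1 = eps(h) 1 for the generators g, x.\<close>
definition taft_module_algebra :: "nat \<Rightarrow> 'k::field \<Rightarrow> nat \<Rightarrow> nat \<Rightarrow> ('k pa \<Rightarrow> 'k pa) \<Rightarrow> ('k pa \<Rightarrow> 'k pa) \<Rightarrow> bool" where
  "taft_module_algebra n lam r m G X \<longleftrightarrow>
     (\<forall>f\<in>PA n. G f \<in> PA n \<and> X f \<in> PA n) \<and>
     (\<forall>f\<in>PA n. \<forall>h\<in>PA n. G (padd f h) = padd (G f) (G h) \<and> X (padd f h) = padd (X f) (X h)) \<and>
     (\<forall>c. \<forall>f\<in>PA n. G (psc c f) = psc c (G f) \<and> X (psc c f) = psc c (X f)) \<and>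
     (\<forall>f\<in>PA n. G (X f) = psc lam (X (G f))) \<and>
     (\<forall>f\<in>PA n. (G ^^ m) f = f) \<and>
     (\<forall>f\<in>PA n. (X ^^ r) f = pzero) \<and>
     (\<forall>f\<in>PA n. \<forall>h\<in>PA n. G (pmul n f h) = pmul n (G f) (G h)) \<and>
     (\<forall>f\<in>PA n. \<forall>h\<in>PA n. X (pmul n f h) = padd (pmul n f (X h)) (pmul n (X f) (G h))) \<and>
     G (pone n) = pone n \<and> X (pone n) = pzero"

definition inner_faithful :: "nat \<Rightarrow> 'k::field \<Rightarrow> nat \<Rightarrow> nat \<Rightarrow> ('k pa \<Rightarrow> 'k pa) \<Rightarrow> ('k pa \<Rightarrow> 'k pa) \<Rightarrow> bool" where
  "inner_faithful n lam r m G X \<longleftrightarrow>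
     (\<forall>I. hopf_ideal lam m r I \<and> (\<exists>h\<in>I. h \<noteq> (\<lambda>_. 0)) \<longrightarrow>
          \<not> (\<forall>h\<in>I. \<forall>f\<in>PA n. tact m r G X h f = pzero))"

definition linear_action :: "nat \<Rightarrow> ('k::field pa \<Rightarrow> 'k pa) \<Rightarrow> ('k pa \<Rightarrow> 'k pa) \<Rightarrow> bool" where
  "linear_action n G X \<longleftrightarrow>
     (\<exists>\<pi>. bij_betw \<pi> {..<n} {..<n} \<and> (\<forall>i<n. G (ev i) = ev (\<pi> i))) \<and>
     (\<forall>f\<in>PA n. \<forall>l. (\<forall>p. f p \<noteq> 0 \<longrightarrow> length (snd p) = l) \<longrightarrow>
                   (\<forall>p. G f p \<noteq> 0 \<longrightarrow> length (snd p) = l)) \<and>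
     (\<forall>f\<in>vert_span n. X f \<in> vert_span n) \<and>
     (\<forall>i<n. X (av n i) \<in> vert_arr_span n \<and> X (asv n i) \<in> vert_arr_span n)"

definition descends :: "nat \<Rightarrow> ('k::field pa \<Rightarrow> 'k pa) \<Rightarrow> ('k pa \<Rightarrow> 'k pa) \<Rightarrow> bool" where
  "descends n G X \<longleftrightarrow> (\<forall>F\<in>omega_ideal n. G F \<in> omega_ideal n \<and> X F \<in> omega_ideal n)"

definition grefl :: "nat \<Rightarrow> nat \<Rightarrow> nat \<Rightarrow> nat" where
  "grefl n d i = nat ((int n - int d - int i) mod int n)"

definition qt_sigma :: "nat \<Rightarrow> 'k::field \<Rightarrow> ('k pa \<Rightarrow> 'k pa) \<Rightarrow> ('k pa \<Rightarrow> 'k pa) \<Rightarrow> (nat \<Rightarrow> 'k) \<Rightarrow> arr \<Rightarrow> 'k pa" where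
  "qt_sigma n lam G X \<gamma> a =
     (\<lambda>p. X (arrv n a) p - \<gamma> (tgt n a) * arrv n a p + \<gamma> (src n a) * inverse lam * G (arrv n a) p)"

end

theory Submission
  imports Defs
begin


lemma pmul_eq:
  "pmul n f h (v, l) = (\<Sum>k\<le>length l. f (v, take k l) * h (ptgt n (v, take k l), drop k l))"
proof -
  let ?F = "\<lambda>k. ((v, take k l), (ptgt n (v, take k l), drop k l))"
  have A: "{(p, q). pcat n p q = Some (v, l)} = ?F ` {..length l}"
  proof (rule set_eqI, rule iffI)
    fix x assume "x \<in> {(p, q). pcat n p q = Some (v, l)}"
    then obtain p1 p2 q1 q2 where x: "x = ((p1,p2),(q1,q2))" and pc: "pcat n (p1,p2) (q1,q2) = Some (v,l)"
      by (cases x) auto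
    from pc have "ptgt n (p1,p2) = q1" "p1 = v" "p2 @ q2 = l" by (auto simp: pcat_def split: if_splits)
    then show "x \<in> ?F ` {..length l}"
      apply (simp add: x image_iff)
      apply (rule bexI[of _ "length p2"]) by auto
  next
    fix x assume "x \<in> ?F ` {..length l}"
    then show "x \<in> {(p, q). pcat n p q = Some (v, l)}" by (auto simp: pcat_def)
  qed
  have "pmul n f h (v,l) = (\<Sum>(p,q)\<in>?F ` {..length l}. f p * h q)"
    unfolding pmul_def
    apply (rule sum.mono_neutral_left)
    using A by auto
  also have "\<dots> = (\<Sum>k\<le>length l. f (v, take k l) * h (ptgt n (v, take k l), drop k l))"
    apply (subst sum.reindex)
     apply (auto simp: inj_on_def)
    by (metis length_take min.absorb2)
  finally show ?thesis .
qed


lemma int_g: "0 < n \<Longrightarrow> int (grefl n d i) = (int n - int d - int i) mod int n"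
  by (simp add: grefl_def)
lemma int_sv: "0 < n \<Longrightarrow> int (suc_v n i) = (int i + 1) mod int n"
  by (simp add: suc_v_def zmod_int add.commute)
lemma int_pv: "0 < n \<Longrightarrow> int (pre_v n i) = (int i - 1) mod int n"
proof -
  assume n: "0 < n"
  have "int (pre_v n i) = (int i + int n - 1) mod int n" using n by (simp add: pre_v_def zmod_int of_nat_diff)
  also have "\<dots> = (int i - 1 + int n) mod int n" by (simp add: algebra_simps)
  also have "\<dots> = (int i - 1) mod int n" by simp
  finally show ?thesis .
qed

lemma g_lt: "0 < n \<Longrightarrow> grefl n d i < n"
  by (simp add: grefl_def nat_less_iff)
lemma sv_lt: "0 < n \<Longrightarrow> suc_v n i < n" by (simp add: suc_v_def)
lemma pv_lt: "0 < n \<Longrightarrow> pre_v n i < n" by (simp add: pre_v_def)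

lemma nat_eq_int_mod: "i < n \<Longrightarrow> int i mod int n = int i"
  by simp

lemma g_g: "i < n \<Longrightarrow> grefl n d (grefl n d i) = i"
proof -
  assume i: "i < n" then have n: "0 < n" by simp
  have "int (grefl n d (grefl n d i)) = (int n - int d - (int n - int d - int i) mod int n) mod int n"
    using n by (simp add: int_g)
  also have "\<dots> = (int n - int d - (int n - int d - int i)) mod int n" by (simp add: mod_diff_right_eq)
  also have "\<dots> = int i" using i by simp
  finally show ?thesis by simp
qed

lemma sv_pv: "i < n \<Longrightarrow> suc_v n (pre_v n i) = i"
proof -
  assume i: "i < n" then have n: "0 < n" by simp
  have "int (suc_v n (pre_v n i)) = ((int i - 1) mod int n + 1) mod int n" using n by (simp add: int_sv int_pv)
  also have "\<dots> = int i" using i by (simp add: mod_add_left_eq)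
  finally show ?thesis by simp
qed

lemma pv_sv: "i < n \<Longrightarrow> pre_v n (suc_v n i) = i"
proof -
  assume i: "i < n" then have n: "0 < n" by simp
  have "int (pre_v n (suc_v n i)) = ((int i + 1) mod int n - 1) mod int n" using n by (simp add: int_sv int_pv)
  also have "\<dots> = int i" using i by (simp add: mod_diff_left_eq)
  finally show ?thesis by simp
qed

lemma g_sv: "i < n \<Longrightarrow> grefl n d (suc_v n i) = pre_v n (grefl n d i)"
proof -
  assume i: "i < n" then have n: "0 < n" by simp
  have "int (grefl n d (suc_v n i)) = (int n - int d - (int i + 1) mod int n) mod int n" using n by (simp add: int_sv int_g)
  also have "\<dots> = (int n - int d - (int i + 1)) mod int n" by (rule mod_diff_right_eq)
  also have "\<dots> = (int n - int d - int i - 1) mod int n" by (rule arg_cong[where f="\<lambda>x. x mod int n"]) simp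
  also have "\<dots> = ((int n - int d - int i) mod int n - 1) mod int n" by (simp add: mod_diff_left_eq)
  also have "\<dots> = int (pre_v n (grefl n d i))" using n by (simp add: int_pv int_g)
  finally show ?thesis by simp
qed

lemma g_pv: "i < n \<Longrightarrow> grefl n d (pre_v n i) = suc_v n (grefl n d i)"
  by (metis g_g g_lt g_sv pv_lt sv_pv gr_implies_not0 not_gr0)

lemma g_succ: "i < n \<Longrightarrow> grefl n d (i + 1) = grefl n d (suc_v n i)"
proof -
  assume i: "i < n" then have n: "0 < n" by simp
  have "int (grefl n d (i+1)) = (int n - int d - int (i + 1)) mod int n" using n by (rule int_g)
  also have "\<dots> = (int n - int d - (int i + 1)) mod int n" by (simp add: add.commute)
  also have "\<dots> = (int n - int d - (int i + 1) mod int n) mod int n" by (rule mod_diff_right_eq[symmetric])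
  also have "\<dots> = int (grefl n d (suc_v n i))" using n by (simp add: int_g int_sv)
  finally show ?thesis by simp
qed

lemma sv_neq: "3 \<le> n \<Longrightarrow> i < n \<Longrightarrow> suc_v n i \<noteq> i"
proof
  assume n: "3 \<le> n" and i: "i < n" and e: "suc_v n i = i"
  show False
  proof (cases "i + 1 < n")
    case True then show False using e by (simp add: suc_v_def)
  next
    case False then have "i + 1 = n" using i by simp
    then show False using e n by (simp add: suc_v_def)
  qed
qed

lemma sv_neq_pv: "3 \<le> n \<Longrightarrow> i < n \<Longrightarrow> suc_v n i \<noteq> pre_v n i"
proof
  assume n: "3 \<le> n" and i: "i < n" and e: "suc_v n i = pre_v n i"
  have "int (suc_v n i) = int (pre_v n i)" using e by simp
  then have "(int i + 1) mod int n = (int i - 1) mod int n" using n by (simp add: int_sv int_pv)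
  then have "int n dvd (int i + 1) - (int i - 1)" by (simp add: mod_eq_dvd_iff)
  then have "int n dvd 2" by simp
  then have "n dvd 2" by (metis of_nat_dvd_iff of_nat_numeral)
  then have "n \<le> 2" by (rule dvd_imp_le) simp
  then show False using n by simp
qed

lemma pv_neq: "3 \<le> n \<Longrightarrow> i < n \<Longrightarrow> pre_v n i \<noteq> i"
  by (metis pv_lt sv_neq sv_pv gr_implies_not0 not_gr0)

lemma sv_inj: "i < n \<Longrightarrow> j < n \<Longrightarrow> suc_v n i = suc_v n j \<longleftrightarrow> i = j"
  by (metis pv_sv)
lemma pv_inj: "i < n \<Longrightarrow> j < n \<Longrightarrow> pre_v n i = pre_v n j \<longleftrightarrow> i = j"
  by (metis sv_pv)
lemma g_inj: "i < n \<Longrightarrow> j < n \<Longrightarrow> grefl n d i = grefl n d j \<longleftrightarrow> i = j"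
  by (metis g_g)

lemma special_exists: "0 < n \<Longrightarrow> \<exists>i<n. grefl n d i = i \<or> grefl n d i = suc_v n i"
proof -
  assume n: "0 < n"
  define N where "N = nat ((int n - int d) mod int n)"
  have N: "N < n" "int N = (int n - int d) mod int n" using n by (auto simp: N_def nat_less_iff)
  define i where "i = N div 2"
  have i: "i < n" "i \<le> N" using N by (auto simp: i_def)
  have ii: "N - i - i = 0 \<or> N - i - i = 1" "i + i \<le> N" unfolding i_def by auto
  have gi: "int (grefl n d i) = int (N - i)"
  proof -
    have "int (grefl n d i) = (int n - int d - int i) mod int n" using n by (simp add: int_g)
    also have "\<dots> = ((int n - int d) mod int n - int i) mod int n" by (rule mod_diff_left_eq[symmetric])
    also have "\<dots> = (int N - int i) mod int n" using N by simp
    also have "\<dots> = int (N - i)" using i N by (simp add: of_nat_diff)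
    finally show ?thesis .
  qed
  show ?thesis
  proof (cases "N - i - i = 0")
    case True
    then have "grefl n d i = i" using gi ii by simp
    then show ?thesis using i by blast
  next
    case False
    then have "N - i = i + 1" using ii by simp
    then have "grefl n d i = i + 1" using gi by simp
    moreover have "i + 1 < n" using \<open>N - i = i + 1\<close> N by linarith
    ultimately have "grefl n d i = suc_v n i" by (simp add: suc_v_def)
    then show ?thesis using i by blast
  qed
qed


lemma bas_app: "bas p q = (if q = p then 1 else 0)" by (simp add: bas_def)
lemma ev_bas: "ev i = bas (i, [])" by (simp add: ev_def)
lemma arrv_Arr: "arrv n (Arr i) = bas (i, [Arr i])" by (simp add: arrv_def)
lemma arrv_Star: "arrv n (Star i) = bas (suc_v n i, [Star i])" by (simp add: arrv_def)

lemma padd_app: "padd f h p = f p + h p" by (simp add: padd_def)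
lemma psc_app: "psc c f p = c * f p" by (simp add: psc_def)
lemma pzero_app: "pzero p = 0" by (simp add: pzero_def)

lemma sum_single: assumes "finite A" "a \<in> A" "\<And>x. x \<in> A \<Longrightarrow> x \<noteq> a \<Longrightarrow> f x = 0" shows "sum f A = f a"
  using sum.remove[OF assms(1,2), of f] assms(3) by (simp add: sum.neutral)

lemma pmul_vl: "pmul n (bas (u,[])) f (v,l) = (if v = u then f (v,l) else 0)"
proof -
  have "pmul n (bas (u,[])) f (v,l) = bas (u,[]) (v, take 0 l) * f (ptgt n (v, take 0 l), drop 0 l)"
    unfolding pmul_eq
    by (rule sum_single) (auto simp: bas_app)
  then show ?thesis by (simp add: bas_app)
qed

lemma pmul_vr: "pmul n f (bas (u,[])) (v,l) = (if ptgt n (v,l) = u then f (v,l) else 0)"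
proof -
  have "pmul n f (bas (u,[])) (v,l) = f (v, take (length l) l) * bas (u,[]) (ptgt n (v, take (length l) l), drop (length l) l)"
    unfolding pmul_eq
    by (rule sum_single) (auto simp: bas_app)
  then show ?thesis by (simp add: bas_app)
qed

lemma take_single: "x \<le> length l \<Longrightarrow> take x l = [b] \<Longrightarrow> x = 1"
proof -
  assume a: "x \<le> length l" "take x l = [b]"
  have "length (take x l) = x" using a(1) by simp
  then show ?thesis using a(2) by simp
qed

lemma drop_single: "x \<le> length l \<Longrightarrow> drop x l = [b] \<Longrightarrow> x = length l - 1"
proof -
  assume a: "x \<le> length l" "drop x l = [b]"
  have "length (drop x l) = length l - x" by simp
  then show ?thesis using a by simp
qed

lemma pmul_al: "pmul n (bas (u,[b])) f (v,l) = (if v = u \<and> l \<noteq> [] \<and> hd l = b then f (tgt n b, tl l) else 0)"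
proof (cases l)
  case Nil
  then show ?thesis by (simp add: pmul_eq bas_app)
next
  case (Cons c cs)
  have "pmul n (bas (u,[b])) f (v,l) = bas (u,[b]) (v, take 1 l) * f (ptgt n (v, take 1 l), drop 1 l)"
    unfolding pmul_eq
    apply (rule sum_single)
    using Cons take_single[of _ l b] by (auto simp: bas_app)
  then show ?thesis using Cons by (auto simp: bas_app)
qed

lemma pmul_ar: "pmul n f (bas (u,[b])) (v,l) = (if l \<noteq> [] \<and> last l = b \<and> ptgt n (v, butlast l) = u then f (v, butlast l) else 0)"
proof (cases l rule: rev_cases)
  case Nil
  then show ?thesis by (simp add: pmul_eq bas_app)
next
  case (snoc cs c)
  have "pmul n f (bas (u,[b])) (v,l) = f (v, take (length cs) l) * bas (u,[b]) (ptgt n (v, take (length cs) l), drop (length cs) l)"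
    unfolding pmul_eq
    apply (rule sum_single)
    using snoc drop_single[of _ l b] by (auto simp: bas_app)
  then show ?thesis using snoc by (auto simp: bas_app)
qed

lemma pmul_psc_l: "pmul n (psc c f) h = psc c (pmul n f h)"
  by (rule ext, case_tac x) (simp add: pmul_eq psc_def sum_distrib_left mult.assoc)
lemma pmul_psc_r: "pmul n f (psc c h) = psc c (pmul n f h)"
  by (rule ext, case_tac x) (simp add: pmul_eq psc_def sum_distrib_left ac_simps)
lemma pmul_padd_l: "pmul n (padd f1 f2) h = padd (pmul n f1 h) (pmul n f2 h)"
  by (rule ext, case_tac x) (simp add: pmul_eq padd_def sum.distrib algebra_simps)
lemma pmul_padd_r: "pmul n f (padd h1 h2) = padd (pmul n f h1) (pmul n f h2)"
  by (rule ext, case_tac x) (simp add: pmul_eq padd_def sum.distrib algebra_simps)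
lemma pmul_zero_l: "pmul n pzero h = pzero"
  by (rule ext, case_tac x) (simp add: pmul_eq pzero_def)
lemma pmul_zero_r: "pmul n f pzero = pzero"
  by (rule ext, case_tac x) (simp add: pmul_eq pzero_def)

lemma ev_app: "ev i (v, l) = (if v = i \<and> l = [] then 1 else 0)" by (auto simp: ev_def bas_def)
lemma arrv_app: "arrv n a (v, l) = (if v = src n a \<and> l = [a] then 1 else 0)" by (auto simp: arrv_def bas_def)
lemma pmul_evl: "pmul n (ev u) f (v,l) = (if v = u then f (v,l) else 0)" by (simp add: ev_bas pmul_vl)
lemma pmul_evr: "pmul n f (ev u) (v,l) = (if ptgt n (v,l) = u then f (v,l) else 0)" by (simp add: ev_bas pmul_vr)
lemma pmul_arrl: "pmul n (arrv n a) f (v,l) = (if v = src n a \<and> l \<noteq> [] \<and> hd l = a then f (tgt n a, tl l) else 0)"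
  by (simp add: arrv_def pmul_al)
lemma pmul_arrr: "pmul n f (arrv n a) (v,l) = (if l \<noteq> [] \<and> last l = a \<and> ptgt n (v, butlast l) = src n a then f (v, butlast l) else 0)"
  by (simp add: arrv_def pmul_ar)

lemma bas_PA: "path_ok n p \<Longrightarrow> bas p \<in> PA n"
  by (auto simp: PA_def bas_app)
lemma padd_PA: "f \<in> PA n \<Longrightarrow> h \<in> PA n \<Longrightarrow> padd f h \<in> PA n"
proof -
  assume f: "f \<in> PA n" and h: "h \<in> PA n"
  have "{p. padd f h p \<noteq> 0} \<subseteq> {p. f p \<noteq> 0} \<union> {p. h p \<noteq> 0}" by (auto simp: padd_def)
  then show ?thesis using f h unfolding PA_def by (auto simp: padd_def intro: finite_subset)
qed
lemma psc_PA: "f \<in> PA n \<Longrightarrow> psc c f \<in> PA n"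
proof -
  assume f: "f \<in> PA n"
  have "{p. psc c f p \<noteq> 0} \<subseteq> {p. f p \<noteq> 0}" by (auto simp: psc_def)
  then show ?thesis using f unfolding PA_def by (auto simp: psc_def intro: finite_subset)
qed
lemma pzero_PA: "pzero \<in> PA n" by (simp add: PA_def pzero_def)

lemma ev_PA: "i < n \<Longrightarrow> ev i \<in> PA n" by (simp add: ev_bas bas_PA)
lemma av_PA: "i < n \<Longrightarrow> av n i \<in> PA n" by (simp add: arrv_Arr bas_PA suc_v_def)
lemma asv_PA: "i < n \<Longrightarrow> asv n i \<in> PA n" by (simp add: arrv_Star bas_PA suc_v_def)


locale TS =
  fixes lam :: "'k::field" and r m n d :: nat
    and G X :: "'k pa \<Rightarrow> 'k pa"
    and \<mu> \<mu>s :: "nat \<Rightarrow> 'k"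
  assumes r_gt1: "r > 1" and m_pos: "m > 0" and r_dvd_m: "r dvd m"
    and lam_prim1: "lam ^ r = 1" and lam_prim2: "\<forall>j. 0 < j \<and> j < r \<longrightarrow> lam ^ j \<noteq> 1"
    and r_char: "of_nat r \<noteq> (0::'k)"
    and n_ge3: "n \<ge> 3"
    and action: "taft_module_algebra n lam r m G X"
    and lin: "linear_action n G X"
    and inner: "inner_faithful n lam r m G X"
    and d_range1: "0 < d" and d_range2: "d \<le> n - 1"
    and mu_nz: "\<forall>i<n. \<mu> i \<noteq> 0 \<and> \<mu>s i \<noteq> 0"
    and g_e: "\<forall>i<n. G (ev i) = ev (grefl n d i)"
    and g_a: "\<forall>i<n. G (av n i) = psc (\<mu> i) (asv n (grefl n d (i + 1)))"
    and g_as: "\<forall>i<n. G (asv n i) = psc (\<mu>s i) (av n (grefl n d (i + 1)))"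
    and desc: "descends n G X"
begin

abbreviation "g \<equiv> grefl n d"
abbreviation "sv \<equiv> suc_v n"
abbreviation "pv \<equiv> pre_v n"

lemma n_pos: "0 < n" using n_ge3 by simp

lemma GPA: "f \<in> PA n \<Longrightarrow> G f \<in> PA n" using action by (simp add: taft_module_algebra_def)
lemma XPA: "f \<in> PA n \<Longrightarrow> X f \<in> PA n" using action by (simp add: taft_module_algebra_def)
lemma Gadd: "f \<in> PA n \<Longrightarrow> h \<in> PA n \<Longrightarrow> G (padd f h) = padd (G f) (G h)" using action by (simp add: taft_module_algebra_def)
lemma Xadd: "f \<in> PA n \<Longrightarrow> h \<in> PA n \<Longrightarrow> X (padd f h) = padd (X f) (X h)" using action by (simp add: taft_module_algebra_def)
lemma Gsc: "f \<in> PA n \<Longrightarrow> G (psc c f) = psc c (G f)" using action by (simp add: taft_module_algebra_def)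
lemma Xsc: "f \<in> PA n \<Longrightarrow> X (psc c f) = psc c (X f)" using action by (simp add: taft_module_algebra_def)
lemma GX: "f \<in> PA n \<Longrightarrow> G (X f) = psc lam (X (G f))" using action by (simp add: taft_module_algebra_def)
lemma Gm: "f \<in> PA n \<Longrightarrow> (G ^^ m) f = f" using action by (simp add: taft_module_algebra_def)
lemma Xr: "f \<in> PA n \<Longrightarrow> (X ^^ r) f = pzero" using action by (simp add: taft_module_algebra_def)
lemma Gmul: "f \<in> PA n \<Longrightarrow> h \<in> PA n \<Longrightarrow> G (pmul n f h) = pmul n (G f) (G h)" using action by (simp add: taft_module_algebra_def)
lemma Xmul: "f \<in> PA n \<Longrightarrow> h \<in> PA n \<Longrightarrow> X (pmul n f h) = padd (pmul n f (X h)) (pmul n (X f) (G h))" using action by (simp add: taft_module_algebra_def)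

lemma Xzero: "X pzero = pzero"
proof -
  have "X (psc 0 pzero) = psc 0 (X pzero)" by (rule Xsc) (rule pzero_PA)
  moreover have "psc 0 pzero = (pzero :: 'k pa)" by (simp add: psc_def pzero_def)
  moreover have "psc 0 (X pzero) = pzero" by (simp add: psc_def pzero_def)
  ultimately show ?thesis by simp
qed
lemma Gzero: "G pzero = pzero"
proof -
  have "G (psc 0 pzero) = psc 0 (G pzero)" by (rule Gsc) (rule pzero_PA)
  moreover have "psc 0 pzero = (pzero :: 'k pa)" by (simp add: psc_def pzero_def)
  moreover have "psc 0 (G pzero) = pzero" by (simp add: psc_def pzero_def)
  ultimately show ?thesis by simp
qed

lemma Xvert: "f \<in> vert_span n \<Longrightarrow> X f \<in> vert_span n" using lin by (simp add: linear_action_def)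
lemma Xarr: "i < n \<Longrightarrow> X (av n i) \<in> vert_arr_span n \<and> X (asv n i) \<in> vert_arr_span n" using lin by (simp add: linear_action_def)

lemma ev_vert: "i < n \<Longrightarrow> ev i \<in> vert_span n"
  using ev_PA[of i n] unfolding vert_span_def by (auto simp: ev_app)

definition gam :: "nat \<Rightarrow> 'k" where "gam i = X (ev i) (i, [])"

lemma Xev_long: "i < n \<Longrightarrow> l \<noteq> [] \<Longrightarrow> X (ev i) (v, l) = 0"
  using Xvert[OF ev_vert, of i] by (auto simp: vert_span_def)

lemma ev_ev: "pmul n (ev i) (ev j) = (if i = j then ev i else pzero)"
  by (rule ext, case_tac x) (auto simp: ev_app pmul_evl pzero_def)

lemma V3: assumes i: "i < n" shows "X (ev i) (v, []) = (if v = i then X (ev i) (v, []) else 0) + (if v = g i then X (ev i) (v, []) else 0)"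
proof -
  have "X (ev i) = X (pmul n (ev i) (ev i))" by (simp add: ev_ev)
  also have "\<dots> = padd (pmul n (ev i) (X (ev i))) (pmul n (X (ev i)) (G (ev i)))"
    using i by (simp add: Xmul ev_PA)
  also have "\<dots> = padd (pmul n (ev i) (X (ev i))) (pmul n (X (ev i)) (ev (g i)))"
    using g_e i by simp
  finally have "X (ev i) (v, []) = padd (pmul n (ev i) (X (ev i))) (pmul n (X (ev i)) (ev (g i))) (v, [])"
    by simp
  also have "\<dots> = (if v = i then X (ev i) (v, []) else 0) + (if v = g i then X (ev i) (v, []) else 0)"
    by (simp add: padd_app ev_app pmul_evl pmul_evr)
  finally show ?thesis .
qed

lemma Xev_out: assumes i: "i < n" and a: "v \<noteq> i" "v \<noteq> g i" shows "X (ev i) (v, []) = 0"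
proof -
  have "X (ev i) (v, []) = (if v = i then X (ev i) (v, []) else 0) + (if v = g i then X (ev i) (v, []) else 0)"
    by (rule V3[OF i])
  also have "\<dots> = 0" using a by simp
  finally show ?thesis .
qed

lemma gam_fix: assumes i: "i < n" and gi: "g i = i" shows "gam i = 0"
proof -
  have "X (ev i) (i, []) = (if i = i then X (ev i) (i, []) else 0) + (if i = g i then X (ev i) (i, []) else 0)"
    by (rule V3[OF i])
  also have "\<dots> = X (ev i) (i, []) + X (ev i) (i, [])" using gi by simp
  finally have "X (ev i) (i, []) = X (ev i) (i, []) + X (ev i) (i, [])" .
  then show ?thesis unfolding gam_def by (metis add_cancel_left_right)
qed

lemma Xev_fix: assumes i: "i < n" and gi: "g i = i" shows "X (ev i) (v, []) = 0"
proof (cases "v = i")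
  case True then show ?thesis using gam_fix[OF i gi] by (simp add: gam_def)
next
  case False then show ?thesis using Xev_out[OF i False] gi by simp
qed

lemma V4: assumes i: "i < n" and gi: "g i \<noteq> i" shows "X (ev i) (g i, []) = - gam (g i)"
proof -
  have gl: "g i < n" using g_lt n_pos by blast
  have "pzero = X (pmul n (ev (g i)) (ev i))" using gi by (simp add: ev_ev Xzero)
  also have "\<dots> = padd (pmul n (ev (g i)) (X (ev i))) (pmul n (X (ev (g i))) (G (ev i)))"
    using i gl by (simp add: Xmul ev_PA)
  also have "\<dots> = padd (pmul n (ev (g i)) (X (ev i))) (pmul n (X (ev (g i))) (ev (g i)))"
    using g_e i by simp
  finally have "pzero (g i, []) = padd (pmul n (ev (g i)) (X (ev i))) (pmul n (X (ev (g i))) (ev (g i))) (g i, [])"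
    by simp
  also have "\<dots> = X (ev i) (g i, []) + gam (g i)"
    by (simp add: padd_app ev_app pmul_evl pmul_evr gam_def)
  finally show ?thesis by (simp add: pzero_app eq_neg_iff_add_eq_0)
qed

lemma Xev_form: assumes i: "i < n"
  shows "X (ev i) = padd (psc (gam i) (ev i)) (psc (- gam (g i)) (ev (g i)))"
proof (rule ext)
  fix p :: path
  obtain v l where p: "p = (v, l)" by (cases p)
  show "X (ev i) p = padd (psc (gam i) (ev i)) (psc (- gam (g i)) (ev (g i))) p"
  proof (cases "l = []")
    case False then show ?thesis using i by (simp add: p Xev_long padd_app psc_app ev_app)
  next
    case True
    show ?thesis
    proof (cases "g i = i")
      case gi: True
      then show ?thesis using i True Xev_fix[of i v] gam_fix[of i] by (simp add: p padd_app psc_app ev_app)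
    next
      case gi: False
      show ?thesis
      proof (cases "v = i")
        case True then show ?thesis using gi \<open>l = []\<close> by (simp add: p padd_app psc_app ev_app gam_def)
      next
        case vi: False
        show ?thesis
        proof (cases "v = g i")
          case True then show ?thesis using gi vi \<open>l = []\<close> V4[OF i gi] by (simp add: p padd_app psc_app ev_app)
        next
          case False then show ?thesis using vi \<open>l = []\<close> Xev_out[OF i vi False] by (simp add: p padd_app psc_app ev_app)
        qed
      qed
    qed
  qed
qed

lemma G_ev_comb: assumes i: "i < n" and j: "j < n"
  shows "G (padd (psc a (ev i)) (psc b (ev j))) = padd (psc a (ev (g i))) (psc b (ev (g j)))"
proof -
  have "G (padd (psc a (ev i)) (psc b (ev j))) = padd (G (psc a (ev i))) (G (psc b (ev j)))"
    by (rule Gadd) (simp_all add: psc_PA ev_PA i j)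
  also have "\<dots> = padd (psc a (G (ev i))) (psc b (G (ev j)))"
    using i j by (simp add: Gsc ev_PA)
  also have "\<dots> = padd (psc a (ev (g i))) (psc b (ev (g j)))" using i j g_e by simp
  finally show ?thesis .
qed

lemma gam_rel: assumes i: "i < n" shows "gam i = lam * gam (g i)" "gam (g i) = lam * gam i"
proof -
  have gl: "g i < n" using g_lt n_pos by blast
  have ggi: "g (g i) = i" using g_g i by blast
  have "G (X (ev i)) = psc lam (X (G (ev i)))" by (rule GX[OF ev_PA[OF i]])
  also have "\<dots> = psc lam (X (ev (g i)))" using g_e i by simp
  finally have E0: "G (X (ev i)) = psc lam (X (ev (g i)))" .
  have L: "G (X (ev i)) = padd (psc (gam i) (ev (g i))) (psc (- gam (g i)) (ev i))"
    unfolding Xev_form[OF i] using G_ev_comb[OF i gl] ggi by simp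
  have R: "X (ev (g i)) = padd (psc (gam (g i)) (ev (g i))) (psc (- gam i) (ev i))"
    using Xev_form[OF gl] ggi by simp
  have E: "padd (psc (gam i) (ev (g i))) (psc (- gam (g i)) (ev i)) = psc lam (padd (psc (gam (g i)) (ev (g i))) (psc (- gam i) (ev i)))"
    using E0[unfolded L R] .
  have "gam i = lam * gam (g i) \<and> gam (g i) = lam * gam i"
  proof (cases "g i = i")
    case True then show ?thesis using gam_fix[OF i True] by simp
  next
    case False
    have a: "gam i = lam * gam (g i)" using fun_cong[OF E, of "(g i, [])"] False by (simp add: padd_app psc_app ev_app)
    have b: "gam (g i) = lam * gam i" using fun_cong[OF E, of "(i, [])"] False by (simp add: padd_app psc_app ev_app)
    show ?thesis using a b by blast
  qed
  then show "gam i = lam * gam (g i)" "gam (g i) = lam * gam i" by blast+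
qed

end


context TS begin

lemma gam_gi_inv: "i < n \<Longrightarrow> gam (g i) = gam i * inverse lam"
proof -
  assume i: "i < n"
  have l0: "lam \<noteq> 0" using lam_prim1 r_gt1 by (metis one_neq_zero power_0_left not_one_less_zero less_imp_neq)
  have "gam i = lam * gam (g i)" by (rule gam_rel(1)[OF i])
  then show ?thesis using l0 by (simp add: field_simps)
qed

lemma lam_nz: "lam \<noteq> 0" using lam_prim1 r_gt1 by (metis one_neq_zero power_0_left less_imp_neq not_one_less_zero)

definition gmu :: "arr \<Rightarrow> 'k" where "gmu a = (case a of Arr i \<Rightarrow> \<mu> i | Star i \<Rightarrow> \<mu>s i)"
definition garr :: "arr \<Rightarrow> arr" where "garr a = (case a of Arr i \<Rightarrow> Star (g (sv i)) | Star i \<Rightarrow> Arr (g (sv i)))"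

lemma g_Suc: "i < n \<Longrightarrow> g (Suc i) = g (sv i)" using g_succ[of i n d] by simp

lemma G_arr: "arr_idx a < n \<Longrightarrow> G (arrv n a) = psc (gmu a) (arrv n (garr a))"
  by (cases a) (simp_all add: gmu_def garr_def g_a g_as g_Suc)

lemma src_garr: "arr_idx a < n \<Longrightarrow> src n (garr a) = g (src n a)"
  by (cases a) (simp_all add: garr_def g_sv sv_pv g_lt n_pos)
lemma tgt_garr: "arr_idx a < n \<Longrightarrow> tgt n (garr a) = g (tgt n a)"
  by (cases a) (simp_all add: garr_def g_sv sv_pv g_lt n_pos)
lemma idx_garr: "arr_idx (garr a) < n"
  by (cases a) (simp_all add: garr_def g_lt n_pos)
lemma src_lt: "arr_idx a < n \<Longrightarrow> src n a < n" by (cases a) (simp_all add: sv_lt n_pos)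
lemma tgt_lt: "arr_idx a < n \<Longrightarrow> tgt n a < n" by (cases a) (simp_all add: sv_lt n_pos)
lemma arrv_PA: "arr_idx a < n \<Longrightarrow> arrv n a \<in> PA n"
  by (cases a) (simp_all add: av_PA asv_PA)

abbreviation sig :: "arr \<Rightarrow> 'k pa" where "sig \<equiv> qt_sigma n lam G X gam"

lemma sig_app: "sig a p = X (arrv n a) p - gam (tgt n a) * arrv n a p + gam (src n a) * inverse lam * G (arrv n a) p"
  by (simp add: qt_sigma_def)

lemma ev_arr_l: "pmul n (ev (src n a)) (arrv n a) = arrv n a"
  by (rule ext, case_tac x) (simp add: pmul_evl arrv_app)
lemma ev_arr_r: "pmul n (arrv n a) (ev (tgt n a)) = arrv n a"
  by (rule ext, case_tac x) (auto simp: pmul_evr arrv_app)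

lemma XA_vas: "arr_idx a < n \<Longrightarrow> X (arrv n a) \<in> vert_arr_span n"
  using Xarr by (cases a) auto

lemma XA_long: "arr_idx a < n \<Longrightarrow> 2 \<le> length l \<Longrightarrow> X (arrv n a) (v, l) = 0"
  using XA_vas[of a] by (force simp: vert_arr_span_def)

lemma E1: assumes a: "arr_idx a < n"
  shows "X (arrv n a) = padd (pmul n (ev (src n a)) (X (arrv n a))) (pmul n (X (ev (src n a))) (psc (gmu a) (arrv n (garr a))))"
proof -
  have "X (arrv n a) = X (pmul n (ev (src n a)) (arrv n a))" by (simp add: ev_arr_l)
  also have "\<dots> = padd (pmul n (ev (src n a)) (X (arrv n a))) (pmul n (X (ev (src n a))) (G (arrv n a)))"
    by (rule Xmul) (simp_all add: ev_PA arrv_PA src_lt a)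
  finally show ?thesis using G_arr[OF a] by simp
qed

lemma E2: assumes a: "arr_idx a < n"
  shows "X (arrv n a) = padd (pmul n (arrv n a) (X (ev (tgt n a)))) (pmul n (X (arrv n a)) (ev (g (tgt n a))))"
proof -
  have "X (arrv n a) = X (pmul n (arrv n a) (ev (tgt n a)))" by (simp add: ev_arr_r)
  also have "\<dots> = padd (pmul n (arrv n a) (X (ev (tgt n a)))) (pmul n (X (arrv n a)) (G (ev (tgt n a))))"
    by (rule Xmul) (simp_all add: ev_PA arrv_PA tgt_lt a)
  finally show ?thesis using g_e tgt_lt[OF a] by simp
qed

lemma Xev_app: "i < n \<Longrightarrow> X (ev i) (v, l) = (if l = [] then (if v = i then gam i else 0) + (if v = g i then - gam (g i) else 0) else 0)"
  by (simp add: Xev_form padd_app psc_app ev_app)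

lemma sig_vert: assumes a: "arr_idx a < n" and nz: "sig a (v, []) \<noteq> 0"
  shows "v = src n a \<and> v = g (tgt n a)"
proof -
  let ?F = "X (arrv n a)"
  have s1: "?F (v, []) = (if v = src n a then ?F (v, []) else 0)"
    using fun_cong[OF E1[OF a], of "(v, [])"]
    by (simp add: padd_app pmul_evl pmul_psc_r psc_app pmul_arrr)
  have s2: "?F (v, []) = (if v = g (tgt n a) then ?F (v, []) else 0)"
    using fun_cong[OF E2[OF a], of "(v, [])"]
    by (simp add: padd_app pmul_evr pmul_arrl)
  have "sig a (v, []) = ?F (v, [])" using G_arr[OF a] by (simp add: sig_app arrv_app psc_app)
  then have F0: "?F (v, []) \<noteq> 0" using nz by simp
  have "v = src n a"
  proof (rule ccontr)
    assume "v \<noteq> src n a" with s1 have "?F (v, []) = 0" by simp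
    with F0 show False by simp
  qed
  moreover have "v = g (tgt n a)"
  proof (rule ccontr)
    assume "v \<noteq> g (tgt n a)" with s2 have "?F (v, []) = 0" by simp
    with F0 show False by simp
  qed
  ultimately show ?thesis by simp
qed

lemma PA_path: "f \<in> PA n \<Longrightarrow> f p \<noteq> 0 \<Longrightarrow> path_ok n p" unfolding PA_def by (cases p) auto

lemma sig_path: assumes a: "arr_idx a < n" and nz: "sig a p \<noteq> 0" shows "path_ok n p"
proof -
  have "X (arrv n a) p \<noteq> 0 \<or> (arrv n a p :: 'k) \<noteq> 0 \<or> G (arrv n a) p \<noteq> 0" using nz by (auto simp: sig_app)
  then show ?thesis using PA_path[OF XPA[OF arrv_PA[OF a]]] PA_path[OF arrv_PA[OF a]] PA_path[OF GPA[OF arrv_PA[OF a]]] by blast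
qed

lemma sig_long: assumes a: "arr_idx a < n" and l: "2 \<le> length l" shows "sig a (v, l) = 0"
proof -
  have "(arrv n a (v, l) :: 'k) = 0" "(arrv n (garr a) (v, l) :: 'k) = 0" using l by (auto simp: arrv_app)
  then show ?thesis using XA_long[OF a l] G_arr[OF a] by (simp add: sig_app psc_app)
qed

lemma sig_arr: assumes a: "arr_idx a < n" and nz: "sig a (v, [b]) \<noteq> 0"
  shows "v = src n a \<and> tgt n b = g (tgt n a)"
proof -
  let ?F = "X (arrv n a)" and ?s = "src n a" and ?t = "tgt n a"
  have sl: "?s < n" "?t < n" using a by (simp_all add: src_lt tgt_lt)
  have "?F (v, [b]) = padd (pmul n (ev ?s) ?F) (pmul n (X (ev ?s)) (psc (gmu a) (arrv n (garr a)))) (v, [b])"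
    using fun_cong[OF E1[OF a]] .
  also have "\<dots> = (if v = ?s then ?F (v, [b]) else 0) + gmu a * (if b = garr a \<and> v = g ?s then X (ev ?s) (v, []) else 0)"
    using src_garr[OF a] by (simp add: padd_app pmul_evl pmul_psc_r psc_app pmul_arrr)
  finally have s1: "?F (v, [b]) = (if v = ?s then ?F (v, [b]) else 0) + gmu a * (if b = garr a \<and> v = g ?s then X (ev ?s) (v, []) else 0)" .
  have "?F (v, [b]) = padd (pmul n (arrv n a) (X (ev ?t))) (pmul n ?F (ev (g ?t))) (v, [b])"
    using fun_cong[OF E2[OF a]] .
  also have "\<dots> = (if v = ?s \<and> b = a then X (ev ?t) (?t, []) else 0) + (if tgt n b = g ?t then ?F (v, [b]) else 0)"
    by (simp add: padd_app pmul_evr pmul_arrl)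
  finally have s2: "?F (v, [b]) = (if v = ?s \<and> b = a then X (ev ?t) (?t, []) else 0) + (if tgt n b = g ?t then ?F (v, [b]) else 0)" .
  have sg: "sig a (v, [b]) = ?F (v, [b]) - gam ?t * arrv n a (v, [b]) + gam ?s * inverse lam * (gmu a * arrv n (garr a) (v, [b]))"
    using G_arr[OF a] by (simp add: sig_app psc_app)
  have gs: "gam (g ?s) = gam ?s * inverse lam" by (rule gam_gi_inv[OF sl(1)])
  show ?thesis
  proof (rule ccontr)
    assume H: "\<not> (v = ?s \<and> tgt n b = g ?t)"
    show False
    proof (cases "v = ?s")
      case False
      have F: "?F (v, [b]) = gmu a * (if b = garr a \<and> v = g ?s then - gam (g ?s) else 0)"
        using s1 False sl by (simp add: Xev_app)
      have "(arrv n a (v, [b]) :: 'k) = 0" using False by (simp add: arrv_app)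
      moreover have "(arrv n (garr a) (v, [b]) :: 'k) = (if b = garr a \<and> v = g ?s then 1 else 0)"
        using src_garr[OF a] by (auto simp: arrv_app)
      ultimately have "sig a (v, [b]) = 0" using sg F gs by simp
      then show False using nz by simp
    next
      case True
      then have tb: "tgt n b \<noteq> g ?t" using H by simp
      have F: "?F (v, [b]) = (if b = a then X (ev ?t) (?t, []) else 0)" using s2 tb True by simp
      have Xt: "X (ev ?t) (?t, []) = gam ?t"
      proof (cases "g ?t = ?t")
        case True then show ?thesis using Xev_fix[OF sl(2) True] gam_fix[OF sl(2) True] by simp
      next
        case False then show ?thesis using sl by (simp add: Xev_app)
      qed
      have "(arrv n a (v, [b]) :: 'k) = (if b = a then 1 else 0)" using True by (simp add: arrv_app)
      moreover have Z: "gam ?s * inverse lam * (gmu a * arrv n (garr a) (v, [b])) = 0"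
      proof (cases "g ?s = ?s")
        case True then show ?thesis using gam_fix[OF sl(1) True] by simp
      next
        case False then show ?thesis using \<open>v = ?s\<close> src_garr[OF a] by (simp add: arrv_app)
      qed
      have sg2: "sig a (v, [b]) = ?F (v, [b]) - gam ?t * arrv n a (v, [b]) + 0" using sg[unfolded Z] .
      ultimately have "sig a (v, [b]) = 0" using sg2 F Xt by simp
      then show False using nz by simp
    qed
  qed
qed

end


context TS begin

lemma sig_rep: assumes a: "arr_idx a < n"
  shows "sig a (v, l) = sig a (src n a, []) * ev (src n a) (v, l) + sig a (src n a, [Arr (src n a)]) * av n (src n a) (v, l)
     + sig a (src n a, [Star (pv (src n a))]) * asv n (pv (src n a)) (v, l)"
proof -
  let ?s = "src n a"
  have sl: "?s < n" using a by (simp add: src_lt)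
  have svpv: "sv (pv ?s) = ?s" using sl by (simp add: sv_pv)
  consider "l = []" | b where "l = [b]" | "2 \<le> length l"
  proof (cases l)
    case Nil then show ?thesis using that by simp
  next
    case (Cons b bs) then show ?thesis using that by (cases bs) auto
  qed
  then show ?thesis
  proof cases
    case 1
    show ?thesis
    proof (cases "v = ?s")
      case True then show ?thesis using 1 by (simp add: ev_app arrv_app)
    next
      case False
      then have "sig a (v, []) = 0" using sig_vert[OF a] by blast
      then show ?thesis using 1 False by (simp add: ev_app arrv_app)
    qed
  next
    case (2 b)
    show ?thesis
    proof (cases "v = ?s")
      case False
      then have "sig a (v, [b]) = 0" using sig_arr[OF a] by blast
      then show ?thesis using 2 False svpv by (simp add: ev_app arrv_app)
    next
      case True
      show ?thesis
      proof (cases "sig a (v, [b]) = 0")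
        case True
        then show ?thesis using 2 \<open>v = ?s\<close> svpv by (auto simp: ev_app arrv_app)
      next
        case False
        then have po: "path_ok n (v, [b])" by (rule sig_path[OF a])
        then have "src n b = ?s" "arr_idx b < n" using \<open>v = ?s\<close> by auto
        then have "b = Arr ?s \<or> b = Star (pv ?s)"
          by (cases b) (auto, metis pv_sv)
        then show ?thesis using 2 \<open>v = ?s\<close> svpv by (auto simp: ev_app arrv_app)
      qed
    qed
  next
    case 3
    then show ?thesis using sig_long[OF a 3] by (auto simp: ev_app arrv_app)
  qed
qed

definition "cA i = sig (Arr i) (i, [])"
definition "bA i = sig (Arr i) (i, [Arr i])"
definition "dA i = sig (Arr i) (i, [Star (pv i)])"
definition "cS i = sig (Star i) (sv i, [])"
definition "bS i = sig (Star i) (sv i, [Arr (sv i)])"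
definition "dS i = sig (Star i) (sv i, [Star i])"

lemma sigA: "i < n \<Longrightarrow> sig (Arr i) (v, l) = cA i * ev i (v, l) + bA i * av n i (v, l) + dA i * asv n (pv i) (v, l)"
  using sig_rep[of "Arr i" v l] by (simp add: cA_def bA_def dA_def)
lemma sigS: "i < n \<Longrightarrow> sig (Star i) (v, l) = cS i * ev (sv i) (v, l) + bS i * av n (sv i) (v, l) + dS i * asv n i (v, l)"
  using sig_rep[of "Star i" v l] by (simp add: cS_def bS_def dS_def pv_sv)

lemma XA: assumes i: "i < n"
  shows "X (av n i) (v, l) = gam (sv i) * av n i (v, l) - gam i * inverse lam * \<mu> i * asv n (g (sv i)) (v, l)
     + cA i * ev i (v, l) + bA i * av n i (v, l) + dA i * asv n (pv i) (v, l)"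
proof -
  have "sig (Arr i) (v, l) = X (av n i) (v, l) - gam (sv i) * av n i (v, l) + gam i * inverse lam * G (av n i) (v, l)"
    by (simp add: sig_app)
  moreover have "G (av n i) = psc (\<mu> i) (asv n (g (sv i)))" using g_a i by (simp add: g_Suc)
  ultimately show ?thesis using sigA[OF i, of v l] by (simp add: psc_app algebra_simps)
qed

lemma XS: assumes i: "i < n"
  shows "X (asv n i) (v, l) = gam i * asv n i (v, l) - gam (sv i) * inverse lam * \<mu>s i * av n (g (sv i)) (v, l)
     + cS i * ev (sv i) (v, l) + bS i * av n (sv i) (v, l) + dS i * asv n i (v, l)"
proof -
  have "sig (Star i) (v, l) = X (asv n i) (v, l) - gam i * asv n i (v, l) + gam (sv i) * inverse lam * G (asv n i) (v, l)"
    by (simp add: sig_app)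
  moreover have "G (asv n i) = psc (\<mu>s i) (av n (g (sv i)))" using g_as i by (simp add: g_Suc)
  ultimately show ?thesis using sigS[OF i, of v l] by (simp add: psc_app algebra_simps)
qed

lemma cA_c: "i < n \<Longrightarrow> cA i \<noteq> 0 \<Longrightarrow> g (sv i) = i"
  using sig_vert[of "Arr i" i] by (simp add: cA_def)
lemma bA_c: "i < n \<Longrightarrow> bA i \<noteq> 0 \<Longrightarrow> g (sv i) = sv i"
  using sig_arr[of "Arr i" i "Arr i"] by (simp add: bA_def)
lemma dA_c: "i < n \<Longrightarrow> dA i \<noteq> 0 \<Longrightarrow> g i = i"
proof -
  assume i: "i < n" and nz: "dA i \<noteq> 0"
  have "pv i = g (sv i)" using sig_arr[of "Arr i" i "Star (pv i)"] nz i by (simp add: dA_def)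
  then have "pv i = pv (g i)" using i by (simp add: g_sv)
  then show ?thesis using i pv_inj[of i n "g i"] g_lt n_pos by auto
qed
lemma cS_c: "i < n \<Longrightarrow> cS i \<noteq> 0 \<Longrightarrow> g i = sv i"
  using sig_vert[of "Star i" "sv i"] by (simp add: cS_def)
lemma bS_c: "i < n \<Longrightarrow> bS i \<noteq> 0 \<Longrightarrow> g (sv i) = sv i"
proof -
  assume i: "i < n" and nz: "bS i \<noteq> 0"
  have h: "sv (sv i) = g i" using sig_arr[of "Star i" "sv i" "Arr (sv i)"] nz i by (simp add: bS_def)
  have "g (sv i) = pv (g i)" using i by (simp add: g_sv)
  also have "\<dots> = pv (sv (sv i))" using h by simp
  also have "\<dots> = sv i" using i by (simp add: pv_sv sv_lt n_pos)
  finally show ?thesis .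
qed
lemma dS_c: "i < n \<Longrightarrow> dS i \<noteq> 0 \<Longrightarrow> g i = i"
  using sig_arr[of "Star i" "sv i" "Star i"] by (simp add: dS_def)

lemma k_iff: "i < n \<Longrightarrow> g (sv i) = i \<longleftrightarrow> g i = sv i"
proof
  assume i: "i < n" and h: "g (sv i) = i"
  have "g (g (sv i)) = sv i" using i by (simp add: g_g sv_lt n_pos)
  then show "g i = sv i" using h by simp
next
  assume i: "i < n" and h: "g i = sv i"
  have "g (g i) = i" using i by (simp add: g_g)
  then show "g (sv i) = i" using h by simp
qed
lemma fixsv_iff: "i < n \<Longrightarrow> g (sv i) = sv i \<longleftrightarrow> g i = sv (sv i)"
proof
  assume i: "i < n" and h: "g (sv i) = sv i"
  have "pv (g i) = sv i" using h i by (simp add: g_sv)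
  then have "sv (pv (g i)) = sv (sv i)" by simp
  then show "g i = sv (sv i)" using i g_lt n_pos by (simp add: sv_pv)
next
  assume i: "i < n" and h: "g i = sv (sv i)"
  have "g (sv i) = pv (g i)" using i by (simp add: g_sv)
  then show "g (sv i) = sv i" using h i by (simp add: pv_sv sv_lt n_pos)
qed

end


context TS begin

lemma fix_facts: assumes j: "j < n" and gj: "g j = j"
  shows "sv (pv j) = j" "g (pv j) = sv j" "g (sv j) = pv j" "sv j \<noteq> j" "pv j \<noteq> j" "sv j \<noteq> pv j"
    "pv j < n" "sv j < n" "pv (sv j) = j"
  using j gj n_ge3 by (simp_all add: sv_pv g_pv g_sv sv_neq pv_neq sv_neq_pv pv_lt sv_lt n_pos pv_sv)

lemma k_facts: assumes k: "k < n" and gk: "g k = sv k"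
  shows "g (sv k) = k" "sv k \<noteq> k" "g k \<noteq> k" "sv k < n" "pv (sv k) = k"
proof -
  show "g (sv k) = k" using k_iff[OF k] gk by simp
  show "sv k \<noteq> k" using k n_ge3 by (simp add: sv_neq)
  then show "g k \<noteq> k" using gk by simp
  show "sv k < n" by (simp add: sv_lt n_pos)
  show "pv (sv k) = k" using k by (simp add: pv_sv)
qed

lemma sigA_fun: "i < n \<Longrightarrow> sig (Arr i) = padd (psc (cA i) (ev i)) (padd (psc (bA i) (av n i)) (psc (dA i) (asv n (pv i))))"
  by (rule ext, case_tac x) (simp add: sigA padd_app psc_app)
lemma sigS_fun: "i < n \<Longrightarrow> sig (Star i) = padd (psc (cS i) (ev (sv i))) (padd (psc (bS i) (av n (sv i))) (psc (dS i) (asv n i)))"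
  by (rule ext, case_tac x) (simp add: sigS padd_app psc_app)

lemma G3: assumes "f1 \<in> PA n" "f2 \<in> PA n" "f3 \<in> PA n"
  shows "G (padd (psc a1 f1) (padd (psc a2 f2) (psc a3 f3))) = padd (psc a1 (G f1)) (padd (psc a2 (G f2)) (psc a3 (G f3)))"
  using assms by (simp add: Gadd Gsc padd_PA psc_PA)

lemma G3b: assumes "f1 \<in> PA n" "f2 \<in> PA n" "f3 \<in> PA n"
  shows "G (padd f1 (padd (psc a2 f2) (psc a3 f3))) = padd (G f1) (padd (psc a2 (G f2)) (psc a3 (G f3)))"
proof -
  have "G (padd f1 (padd (psc a2 f2) (psc a3 f3))) = padd (G f1) (G (padd (psc a2 f2) (psc a3 f3)))"
    using assms by (intro Gadd padd_PA psc_PA)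
  also have "G (padd (psc a2 f2) (psc a3 f3)) = padd (G (psc a2 f2)) (G (psc a3 f3))"
    using assms by (intro Gadd psc_PA)
  also have "G (psc a2 f2) = psc a2 (G f2)" using assms by (intro Gsc)
  also have "G (psc a3 f3) = psc a3 (G f3)" using assms by (intro Gsc)
  finally show ?thesis .
qed

lemma Gav: "i < n \<Longrightarrow> G (av n i) = psc (\<mu> i) (asv n (g (sv i)))" using g_a by (simp add: g_Suc)
lemma Gasv: "i < n \<Longrightarrow> G (asv n i) = psc (\<mu>s i) (av n (g (sv i)))" using g_as by (simp add: g_Suc)

lemma G_sigA: assumes i: "i < n"
  shows "G (sig (Arr i)) (v, l) = cA i * ev (g i) (v, l) + bA i * \<mu> i * asv n (g (sv i)) (v, l) + dA i * \<mu>s (pv i) * av n (g i) (v, l)"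
proof -
  have pl: "pv i < n" by (simp add: pv_lt n_pos)
  have "G (sig (Arr i)) = padd (psc (cA i) (G (ev i))) (padd (psc (bA i) (G (av n i))) (psc (dA i) (G (asv n (pv i)))))"
    unfolding sigA_fun[OF i] by (rule G3) (simp_all add: ev_PA av_PA asv_PA i pl)
  then show ?thesis using i pl g_e by (simp add: Gav Gasv padd_app psc_app sv_pv algebra_simps)
qed

lemma G_sigS: assumes i: "i < n"
  shows "G (sig (Star i)) (v, l) = cS i * ev (g (sv i)) (v, l) + bS i * \<mu> (sv i) * asv n (g (sv (sv i))) (v, l) + dS i * \<mu>s i * av n (g (sv i)) (v, l)"
proof -
  have sl: "sv i < n" by (simp add: sv_lt n_pos)
  have "G (sig (Star i)) = padd (psc (cS i) (G (ev (sv i)))) (padd (psc (bS i) (G (av n (sv i)))) (psc (dS i) (G (asv n i))))"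
    unfolding sigS_fun[OF i] by (rule G3) (simp_all add: ev_PA av_PA asv_PA i sl)
  then show ?thesis using i sl g_e by (simp add: Gav Gasv padd_app psc_app algebra_simps)
qed

lemma sig_fun: assumes a: "arr_idx a < n"
  shows "sig a = padd (X (arrv n a)) (padd (psc (- gam (tgt n a)) (arrv n a)) (psc (gam (src n a) * inverse lam) (G (arrv n a))))"
  by (rule ext) (simp add: sig_app padd_app psc_app algebra_simps)

lemma sig_equiv: assumes a: "arr_idx a < n"
  shows "G (sig a) p = lam * gmu a * sig (garr a) p"
proof -
  let ?b = "garr a" and ?s = "src n a" and ?t = "tgt n a"
  have aP: "(arrv n a :: 'k pa) \<in> PA n" by (rule arrv_PA[OF a])
  have bP: "(arrv n ?b :: 'k pa) \<in> PA n" by (rule arrv_PA[OF idx_garr])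
  have sl: "?s < n" "?t < n" using a by (simp_all add: src_lt tgt_lt)
  have "G (sig a) = padd (G (X (arrv n a))) (padd (psc (- gam ?t) (G (arrv n a))) (psc (gam ?s * inverse lam) (G (G (arrv n a)))))"
    unfolding sig_fun[OF a] by (rule G3b) (simp_all add: aP XPA GPA)
  also have "\<dots> = padd (psc lam (psc (gmu a) (X (arrv n ?b)))) (padd (psc (- gam ?t) (psc (gmu a) (arrv n ?b))) (psc (gam ?s * inverse lam) (psc (gmu a) (G (arrv n ?b)))))"
    using aP bP by (simp add: GX G_arr[OF a] Gsc Xsc)
  finally have L: "G (sig a) p = lam * gmu a * X (arrv n ?b) p - gam ?t * gmu a * arrv n ?b p + gam ?s * inverse lam * gmu a * G (arrv n ?b) p"
    by (simp add: padd_app psc_app algebra_simps)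
  have R: "sig ?b p = X (arrv n ?b) p - gam (g ?t) * arrv n ?b p + gam (g ?s) * inverse lam * G (arrv n ?b) p"
    using src_garr[OF a] tgt_garr[OF a] by (simp add: sig_app)
  have e1: "gam ?t = lam * gam (g ?t)" by (rule gam_rel(1)[OF sl(2)])
  have e2: "gam (g ?s) = gam ?s * inverse lam" by (rule gam_gi_inv[OF sl(1)])
  show ?thesis unfolding L R e2 using lam_nz by (simp add: e1 field_simps)
qed

lemma eqk1: assumes k: "k < n" and gk: "g k = sv k" shows "cA k = lam * \<mu> k * cS k"
proof -
  note kf = k_facts[OF k gk]
  have z: "bA k = 0" "dA k = 0"
    using bA_c[OF k] dA_c[OF k] kf gk by auto
  have "G (sig (Arr k)) (sv k, []) = lam * gmu (Arr k) * sig (garr (Arr k)) (sv k, [])"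
    by (rule sig_equiv) (simp add: k)
  then show ?thesis using k kf gk z by (simp add: G_sigA gmu_def garr_def ev_app arrv_app cS_def)
qed

lemma eqk2: assumes k: "k < n" and gk: "g k = sv k" shows "cS k = lam * \<mu>s k * cA k"
proof -
  note kf = k_facts[OF k gk]
  have z: "bS k = 0" "dS k = 0"
    using bS_c[OF k] dS_c[OF k] kf gk by auto
  have "G (sig (Star k)) (k, []) = lam * gmu (Star k) * sig (garr (Star k)) (k, [])"
    by (rule sig_equiv) (simp add: k)
  then show ?thesis using k kf gk z by (simp add: G_sigS gmu_def garr_def ev_app arrv_app cA_def)
qed

lemma fix_zero: assumes j: "j < n" and gj: "g j = j"
  shows "cA (pv j) = 0" "dA (pv j) = 0" "cA j = 0" "bA j = 0" "cS j = 0" "bS j = 0" "cS (pv j) = 0" "dS (pv j) = 0"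
proof -
  note f = fix_facts[OF j gj]
  show "cA (pv j) = 0" using cA_c[OF f(7)] f gj by auto
  show "dA (pv j) = 0" using dA_c[OF f(7)] f gj by auto
  show "cA j = 0" using cA_c[OF j] f gj by auto
  show "bA j = 0" using bA_c[OF j] f gj by auto
  show "cS j = 0" using cS_c[OF j] f gj by auto
  show "bS j = 0" using bS_c[OF j] f gj by auto
  show "cS (pv j) = 0" using cS_c[OF f(7)] f gj by auto
  show "dS (pv j) = 0" using dS_c[OF f(7)] f gj by auto
qed

lemma k_zero: assumes k: "k < n" and gk: "g k = sv k"
  shows "bA k = 0" "dA k = 0" "bS k = 0" "dS k = 0"
  using bA_c[OF k] dA_c[OF k] bS_c[OF k] dS_c[OF k] k_facts[OF k gk] gk by auto

lemma mu_nz': "i < n \<Longrightarrow> \<mu> i \<noteq> 0" "i < n \<Longrightarrow> \<mu>s i \<noteq> 0" using mu_nz by auto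

lemma eqf1: assumes j: "j < n" and gj: "g j = j" shows "bA (pv j) = lam * dS j"
proof -
  note f = fix_facts[OF j gj] and z = fix_zero[OF j gj]
  have "G (sig (Arr (pv j))) (sv j, [Star j]) = lam * gmu (Arr (pv j)) * sig (garr (Arr (pv j))) (sv j, [Star j])"
    by (rule sig_equiv) (simp add: f)
  then have "bA (pv j) * \<mu> (pv j) = lam * \<mu> (pv j) * dS j"
    using j f gj z by (simp add: G_sigA sigS gmu_def garr_def ev_app arrv_app)
  then show ?thesis using mu_nz'(1)[OF f(7)] by (simp add: field_simps)
qed

lemma eqf2: assumes j: "j < n" and gj: "g j = j" shows "dS j = lam * bA (pv j)"
proof -
  note f = fix_facts[OF j gj] and z = fix_zero[OF j gj]
  have "G (sig (Star j)) (pv j, [Arr (pv j)]) = lam * gmu (Star j) * sig (garr (Star j)) (pv j, [Arr (pv j)])"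
    by (rule sig_equiv) (simp add: j)
  then have "dS j * \<mu>s j = lam * \<mu>s j * bA (pv j)"
    using j f gj z by (simp add: G_sigS sigA gmu_def garr_def ev_app arrv_app)
  then show ?thesis using mu_nz'(2)[OF j] by (simp add: field_simps)
qed

lemma eqf3: assumes j: "j < n" and gj: "g j = j" shows "dA j * \<mu>s (pv j) = lam * \<mu> j * bS (pv j)"
proof -
  note f = fix_facts[OF j gj] and z = fix_zero[OF j gj]
  have "G (sig (Arr j)) (j, [Arr j]) = lam * gmu (Arr j) * sig (garr (Arr j)) (j, [Arr j])"
    by (rule sig_equiv) (simp add: j)
  then show ?thesis
    using j f gj z by (simp add: G_sigA sigS gmu_def garr_def ev_app arrv_app)
qed

lemma eqf4: assumes j: "j < n" and gj: "g j = j" shows "bS (pv j) * \<mu> j = lam * \<mu>s (pv j) * dA j"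
proof -
  note f = fix_facts[OF j gj] and z = fix_zero[OF j gj]
  have "G (sig (Star (pv j))) (j, [Star (pv j)]) = lam * gmu (Star (pv j)) * sig (garr (Star (pv j))) (j, [Star (pv j)])"
    by (rule sig_equiv) (simp add: f)
  then show ?thesis
    using j f gj z by (simp add: G_sigS sigA gmu_def garr_def ev_app arrv_app)
qed

end


lemma pmul_arr_arr: "pmul n (arrv n a) (arrv n b) (v, l) = (if v = src n a \<and> l = [a, b] \<and> tgt n a = src n b then 1 else 0)"
  by (cases l) (auto simp: pmul_arrl arrv_app)

lemma prel_app: "i < n \<Longrightarrow> prel n i (v, l) = (if v = suc_v n i \<and> l = [Star i, Arr i] then 1 else 0) - (if v = suc_v n i \<and> l = [Arr (suc_v n i), Star (suc_v n i)] then 1 else 0)"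
  by (auto simp: prel_def padd_app psc_app pmul_arr_arr)

lemma prel_len: "i < n \<Longrightarrow> length l \<noteq> 2 \<Longrightarrow> prel n i (v, l) = 0"
  by (auto simp: prel_app)

lemma pmul_len2_l: assumes z: "\<And>v l. length l \<noteq> 2 \<Longrightarrow> rho (v, l) = 0" and l: "length l \<le> 2"
  shows "pmul n u rho (v, l) = u (v, []) * rho (v, l)"
proof -
  have "pmul n u rho (v, l) = u (v, take 0 l) * rho (ptgt n (v, take 0 l), drop 0 l)"
    unfolding pmul_eq
  proof (rule sum_single)
    fix k assume k: "k \<in> {..length l}" "k \<noteq> 0"
    have "length (drop k l) \<noteq> 2" using k l by simp
    then show "u (v, take k l) * rho (ptgt n (v, take k l), drop k l) = 0" using z by simp
  qed auto
  then show ?thesis by simp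
qed

lemma pmul_len2_r: assumes z: "\<And>v l. length l < 2 \<Longrightarrow> f (v, l) = 0" and l: "length l \<le> 2"
  shows "pmul n f w (v, l) = f (v, l) * w (ptgt n (v, l), [])"
proof -
  have "pmul n f w (v, l) = f (v, take (length l) l) * w (ptgt n (v, take (length l) l), drop (length l) l)"
    unfolding pmul_eq
  proof (rule sum_single)
    fix k assume k: "k \<in> {..length l}" "k \<noteq> length l"
    have "length (take k l) < 2" using k l by simp
    then show "f (v, take k l) * w (ptgt n (v, take k l), drop k l) = 0" using z by simp
  qed auto
  then show ?thesis by simp
qed

lemma omega_term: fixes u w :: "'k::field pa" assumes i: "i < n" and l: "length l \<le> 2"
  shows "pmul n (pmul n u (prel n i)) w (v, l) = u (v, []) * prel n i (v, l) * w (ptgt n (v, l), [])"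
proof -
  have z: "\<And>v l. length l \<noteq> 2 \<Longrightarrow> prel n i (v, l) = 0" using prel_len[OF i] by blast
  have z2: "\<And>v l. length l < 2 \<Longrightarrow> pmul n u (prel n i) (v, l) = 0"
  proof -
    fix v :: nat and l :: "arr list" assume ll: "length l < (2::nat)"
    have "pmul n u (prel n i) (v, l) = u (v, []) * prel n i (v, l)"
      by (rule pmul_len2_l[where rho="prel n i"]) (use z ll in auto)
    moreover have "length l \<noteq> 2" using ll by simp
    then have "prel n i (v, l) = (0::'k)" by (rule z)
    ultimately show "pmul n u (prel n i) (v, l) = 0" by simp
  qed
  have "pmul n (pmul n u (prel n i)) w (v, l) = pmul n u (prel n i) (v, l) * w (ptgt n (v, l), [])"
    by (rule pmul_len2_r[where f="pmul n u (prel n i)"]) (use z2 l in auto)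
  also have "pmul n u (prel n i) (v, l) = u (v, []) * prel n i (v, l)"
    by (rule pmul_len2_l[where rho="prel n i"]) (use z l in auto)
  finally show ?thesis .
qed

lemma psum_list_app: "psum_list fs p = sum_list (map (\<lambda>f. f p) fs)"
  by (induction fs) (simp_all add: psum_list_def padd_app pzero_app)

definition oterm :: "nat \<Rightarrow> path \<Rightarrow> ('k::field pa \<times> nat \<times> 'k pa) \<Rightarrow> 'k" where
  "oterm n p x = (case x of (u, i, w) \<Rightarrow> u (fst p, []) * prel n i p * w (ptgt n p, []))"

lemma omega_coef: fixes F :: "'k::field pa" assumes F: "F \<in> omega_ideal n"
  shows "\<exists>L. (\<forall>x \<in> set L. fst (snd x) < n) \<and>
     (\<forall>v l. length l \<le> 2 \<longrightarrow> F (v, l) = sum_list (map (oterm n (v, l)) L))"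
proof -
  obtain L :: "('k pa \<times> nat \<times> 'k pa) list" where L: "\<forall>(u, i, w) \<in> set L. u \<in> PA n \<and> w \<in> PA n \<and> i < n"
    and FL: "F = psum_list (map (\<lambda>(u, i, w). pmul n (pmul n u (prel n i)) w) L)"
    using F unfolding omega_ideal_def by blast
  have B: "\<forall>v l. length l \<le> 2 \<longrightarrow> F (v, l) = sum_list (map (oterm n (v, l)) L)"
  proof (intro allI impI)
    fix v :: nat and l :: "arr list" assume l: "length l \<le> (2::nat)"
    have "F (v, l) = sum_list (map (\<lambda>(u, i, w). pmul n (pmul n u (prel n i)) w (v, l)) L)"
      unfolding FL psum_list_app by (simp add: split_def o_def)
    also have "\<dots> = sum_list (map (oterm n (v, l)) L)"
      apply (rule arg_cong[where f=sum_list])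
      apply (rule map_cong[OF refl])
      subgoal premises prems for x
      proof -
        obtain u i w where x: "x = (u, i, w)" by (cases x) auto
        have "i < n" using prems L by (auto simp: x)
        then show ?thesis using omega_term[OF _ l] x by (simp add: oterm_def)
      qed
      done
    finally show "F (v, l) = sum_list (map (oterm n (v, l)) L)" .
  qed
  have A: "\<forall>x \<in> set L. fst (snd x) < n" using L by auto
  show ?thesis by (rule exI[of _ L]) (rule conjI[OF A B])
qed

lemma om_short: fixes F :: "'k::field pa" assumes F: "F \<in> omega_ideal n" and l: "length l < 2" shows "F (v, l) = 0"
proof -
  obtain L where L: "\<forall>x \<in> set L. fst (snd x) < n" and
    E: "\<forall>v l. length l \<le> 2 \<longrightarrow> F (v, l) = sum_list (map (oterm n (v, l)) L)"
    using omega_coef[OF F] by blast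
  have "F (v, l) = sum_list (map (oterm n (v, l)) L)" using E l by simp
  also have "\<dots> = sum_list (map (\<lambda>x. 0) L)"
    apply (rule arg_cong[where f=sum_list])
    apply (rule map_cong[OF refl])
    subgoal premises prems for x
    proof -
      obtain u i w where x: "x = (u, i, w)" by (cases x) auto
      have i: "i < n" using prems L by (auto simp: x)
      have "length l \<noteq> 2" using l by simp
      then have "prel n i (v, l) = (0::'k)" by (rule prel_len[OF i])
      then show ?thesis by (simp add: x oterm_def)
    qed
    done
  finally show ?thesis by simp
qed

lemma om_nonloop: fixes F :: "'k::field pa" assumes F: "F \<in> omega_ideal n"
  and h1: "\<not> (b1 = Arr v \<and> b2 = Star v)" and h2: "\<not> (b1 = Star (pre_v n v) \<and> b2 = Arr (pre_v n v))"
  shows "F (v, [b1, b2]) = 0"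
proof -
  obtain L where L: "\<forall>x \<in> set L. fst (snd x) < n" and
    E: "\<forall>v l. length l \<le> 2 \<longrightarrow> F (v, l) = sum_list (map (oterm n (v, l)) L)"
    using omega_coef[OF F] by blast
  have "F (v, [b1, b2]) = sum_list (map (oterm n (v, [b1, b2])) L)" using E by simp
  also have "\<dots> = sum_list (map (\<lambda>x. 0) L)"
    apply (rule arg_cong[where f=sum_list])
    apply (rule map_cong[OF refl])
    subgoal premises prems for x
    proof -
      obtain u i w where x: "x = (u, i, w)" by (cases x) auto
      have i: "i < n" using prems L by (auto simp: x)
      have "prel n i (v, [b1, b2]) = (0::'k)" using h1 h2 i by (auto simp: prel_app pv_sv)
      then show ?thesis by (simp add: x oterm_def)
    qed
    done
  finally show ?thesis by simp
qed

lemma om_loop: fixes F :: "'k::field pa" assumes F: "F \<in> omega_ideal n" and v: "v < n"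
  shows "F (v, [Arr v, Star v]) + F (v, [Star (pre_v n v), Arr (pre_v n v)]) = 0"
proof -
  obtain L where L: "\<forall>x \<in> set L. fst (snd x) < n" and
    E: "\<forall>v l. length l \<le> 2 \<longrightarrow> F (v, l) = sum_list (map (oterm n (v, l)) L)"
    using omega_coef[OF F] by blast
  have "F (v, [Arr v, Star v]) + F (v, [Star (pre_v n v), Arr (pre_v n v)]) =
     sum_list (map (\<lambda>x. oterm n (v, [Arr v, Star v]) x + oterm n (v, [Star (pre_v n v), Arr (pre_v n v)]) x) L)"
    using E by (simp add: sum_list_addf)
  also have "\<dots> = sum_list (map (\<lambda>x. 0) L)"
    apply (rule arg_cong[where f=sum_list])
    apply (rule map_cong[OF refl])
    subgoal premises prems for x
    proof -
      obtain u i w where x: "x = (u, i, w)" by (cases x) auto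
      have i: "i < n" using prems L by (auto simp: x)
      have "prel n i (v, [Arr v, Star v]) + prel n i (v, [Star (pre_v n v), Arr (pre_v n v)]) = (0::'k)"
        using i v by (auto simp: prel_app pv_sv)
      moreover have "ptgt n (v, [Star (pre_v n v), Arr (pre_v n v)]) = v" using v by (simp add: sv_pv)
      moreover have "u (v, []) * prel n i (v, [Arr v, Star v]) * w (v, []) + u (v, []) * prel n i (v, [Star (pre_v n v), Arr (pre_v n v)]) * w (v, [])
         = u (v, []) * (prel n i (v, [Arr v, Star v]) + prel n i (v, [Star (pre_v n v), Arr (pre_v n v)])) * w (v, [])"
        by (simp add: algebra_simps)
      ultimately show ?thesis by (simp add: x oterm_def)
    qed
    done
  finally show ?thesis by simp
qed

lemma pone_l: "pmul n (pone n) f (v, l) = (if v < n then f (v, l) else 0)"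
proof -
  have "pmul n (pone n) f (v, l) = pone n (v, take 0 l) * f (ptgt n (v, take 0 l), drop 0 l)"
    unfolding pmul_eq by (rule sum_single) (auto simp: pone_def)
  then show ?thesis by (simp add: pone_def)
qed

lemma pone_r: "pmul n f (pone n) (v, l) = (if ptgt n (v, l) < n then f (v, l) else 0)"
proof -
  have "pmul n f (pone n) (v, l) = f (v, take (length l) l) * pone n (ptgt n (v, take (length l) l), drop (length l) l)"
    unfolding pmul_eq by (rule sum_single) (auto simp: pone_def)
  then show ?thesis by (simp add: pone_def)
qed

lemma pone_PA: "pone n \<in> PA n"
proof -
  have "{p. (pone n p :: 'a) \<noteq> 0} \<subseteq> (\<lambda>i. (i, [])) ` {..<n}" by (auto simp: pone_def)
  then show ?thesis unfolding PA_def by (auto simp: pone_def intro: finite_subset)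
qed

lemma prel_omega: assumes i: "i < n" shows "prel n i \<in> omega_ideal n"
proof -
  have sl: "suc_v n i < n" using i by (simp add: suc_v_def)
  have E: "pmul n (pmul n (pone n) (prel n i)) (pone n) = prel n i"
  proof (rule ext)
    fix p :: path obtain v l where p: "p = (v, l)" by (cases p)
    show "pmul n (pmul n (pone n) (prel n i)) (pone n) p = prel n i p"
      using i sl by (auto simp: p pone_l pone_r prel_app)
  qed
  have P: "prel n i = psum_list (map (\<lambda>(u, i, w). pmul n (pmul n u (prel n i)) w) [(pone n, i, pone n)])"
    by (rule ext) (simp add: psum_list_app E)
  show ?thesis unfolding omega_ideal_def
    apply (rule CollectI, rule exI[of _ "[(pone n, i, pone n)]"])
    using P i pone_PA[of n] by simp
qed

lemma prel_PA: assumes i: "i < n" shows "prel n i \<in> PA n"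
proof -
  have sl: "suc_v n i < n" using i by (simp add: suc_v_def)
  have "{p. (prel n i p :: 'a) \<noteq> 0} \<subseteq> {(suc_v n i, [Star i, Arr i]), (suc_v n i, [Arr (suc_v n i), Star (suc_v n i)])}"
    using i by (auto simp: prel_app split: if_splits)
  moreover have "\<forall>p. (prel n i p :: 'a) \<noteq> 0 \<longrightarrow> path_ok n p"
    using i sl by (auto simp: prel_app sv_lt split: if_splits)
  ultimately show ?thesis unfolding PA_def by (auto intro: finite_subset)
qed


context TS begin

lemma pmul_arr_PA: assumes a: "arr_idx a < n" and b: "arr_idx b < n" and t: "tgt n a = src n b"
  shows "(pmul n (arrv n a) (arrv n b) :: 'k pa) \<in> PA n"
proof -
  have "pmul n (arrv n a) (arrv n b) = (bas (src n a, [a, b]) :: 'k pa)"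
    by (rule ext, case_tac x) (auto simp: pmul_arr_arr bas_app t)
  moreover have "path_ok n (src n a, [a, b])" using a b t by (simp add: src_lt tgt_lt n_pos)
  ultimately show ?thesis by (simp add: bas_PA)
qed

lemma Xprel_app: assumes i: "i < n"
  shows "X (prel n i) (v, l) = pmul n (asv n i) (X (av n i)) (v, l) + \<mu> i * pmul n (X (asv n i)) (asv n (g (sv i))) (v, l)
    - (pmul n (av n (sv i)) (X (asv n (sv i))) (v, l) + \<mu>s (sv i) * pmul n (X (av n (sv i))) (av n (g (sv (sv i)))) (v, l))"
proof -
  have si: "sv i < n" by (simp add: sv_lt n_pos)
  have P1: "(pmul n (asv n i) (av n i) :: 'k pa) \<in> PA n" by (rule pmul_arr_PA) (simp_all add: i)
  have P2: "(pmul n (av n (sv i)) (asv n (sv i)) :: 'k pa) \<in> PA n" by (rule pmul_arr_PA) (simp_all add: si)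
  have "X (prel n i) = padd (X (pmul n (asv n i) (av n i))) (psc (-1) (X (pmul n (av n (sv i)) (asv n (sv i)))))"
    unfolding prel_def using P1 P2 by (simp add: Xadd Xsc psc_PA)
  also have "X (pmul n (asv n i) (av n i)) = padd (pmul n (asv n i) (X (av n i))) (pmul n (X (asv n i)) (G (av n i)))"
    by (rule Xmul) (simp_all add: i asv_PA av_PA)
  also have "X (pmul n (av n (sv i)) (asv n (sv i))) = padd (pmul n (av n (sv i)) (X (asv n (sv i)))) (pmul n (X (av n (sv i))) (G (asv n (sv i))))"
    by (rule Xmul) (simp_all add: si asv_PA av_PA)
  finally have E: "X (prel n i) = padd (padd (pmul n (asv n i) (X (av n i))) (pmul n (X (asv n i)) (psc (\<mu> i) (asv n (g (sv i))))))
      (psc (- 1) (padd (pmul n (av n (sv i)) (X (asv n (sv i)))) (pmul n (X (av n (sv i))) (psc (\<mu>s (sv i)) (av n (g (sv (sv i))))))))"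
    using i si by (simp add: Gav Gasv)
  show ?thesis unfolding E pmul_psc_r by (simp add: padd_app psc_app)
qed

lemma Gprel_app: assumes i: "i < n"
  shows "G (prel n i) (v, l) = \<mu>s i * \<mu> i * pmul n (av n (g (sv i))) (asv n (g (sv i))) (v, l)
    - \<mu> (sv i) * \<mu>s (sv i) * pmul n (asv n (g (sv (sv i)))) (av n (g (sv (sv i)))) (v, l)"
proof -
  have si: "sv i < n" by (simp add: sv_lt n_pos)
  have P1: "(pmul n (asv n i) (av n i) :: 'k pa) \<in> PA n" by (rule pmul_arr_PA) (simp_all add: i)
  have P2: "(pmul n (av n (sv i)) (asv n (sv i)) :: 'k pa) \<in> PA n" by (rule pmul_arr_PA) (simp_all add: si)
  have "G (prel n i) = padd (G (pmul n (asv n i) (av n i))) (psc (-1) (G (pmul n (av n (sv i)) (asv n (sv i)))))"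
    unfolding prel_def using P1 P2 by (simp add: Gadd Gsc psc_PA)
  also have "G (pmul n (asv n i) (av n i)) = pmul n (G (asv n i)) (G (av n i))"
    by (rule Gmul) (simp_all add: i asv_PA av_PA)
  also have "G (pmul n (av n (sv i)) (asv n (sv i))) = pmul n (G (av n (sv i))) (G (asv n (sv i)))"
    by (rule Gmul) (simp_all add: si asv_PA av_PA)
  finally have E: "G (prel n i) = padd (pmul n (psc (\<mu>s i) (av n (g (sv i)))) (psc (\<mu> i) (asv n (g (sv i)))))
      (psc (- 1) (pmul n (psc (\<mu> (sv i)) (asv n (g (sv (sv i))))) (psc (\<mu>s (sv i)) (av n (g (sv (sv i)))))))"
    using i si by (simp add: Gav Gasv)
  show ?thesis unfolding E pmul_psc_r pmul_psc_l by (simp add: padd_app psc_app algebra_simps)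
qed

lemma prel_om': "i < n \<Longrightarrow> (prel n i :: 'k pa) \<in> omega_ideal n" by (rule prel_omega)
lemma Xprel_om: "i < n \<Longrightarrow> X (prel n i) \<in> omega_ideal n"
  using desc prel_om'[of i] by (simp add: descends_def)
lemma Gprel_om: "i < n \<Longrightarrow> G (prel n i) \<in> omega_ideal n"
  using desc prel_om'[of i] by (simp add: descends_def)

definition "CC i = \<mu> i * \<mu>s i"

lemma CC_step: assumes i: "i < n" shows "CC (sv i) = CC i"
proof -
  let ?q = "g (sv i)"
  have si: "sv i < n" by (simp add: sv_lt n_pos)
  have q: "?q < n" by (simp add: g_lt n_pos)
  have gss: "g (sv (sv i)) = pv ?q" using si by (simp add: g_sv)
  have "G (prel n i) (?q, [Arr ?q, Star ?q]) + G (prel n i) (?q, [Star (pv ?q), Arr (pv ?q)]) = 0"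
    by (rule om_loop[OF Gprel_om[OF i] q])
  moreover have "G (prel n i) (?q, [Arr ?q, Star ?q]) = \<mu>s i * \<mu> i"
    using q gss by (simp add: Gprel_app[OF i] pmul_arr_arr pv_lt n_pos sv_pv)
  moreover have "G (prel n i) (?q, [Star (pv ?q), Arr (pv ?q)]) = - (\<mu> (sv i) * \<mu>s (sv i))"
    using q gss by (simp add: Gprel_app[OF i] pmul_arr_arr pv_lt n_pos sv_pv)
  ultimately show ?thesis by (simp add: CC_def algebra_simps)
qed

lemma om_k: assumes k: "k < n" and gk: "g k = sv k" shows "cA k + \<mu> k * cS k = 0"
proof -
  note kf = k_facts[OF k gk]
  have "X (prel n k) (sv k, [Star k]) = 0" by (rule om_short[OF Xprel_om[OF k]]) simp
  moreover have "X (prel n k) (sv k, [Star k]) = cA k + \<mu> k * cS k"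
    using k kf by (simp add: Xprel_app pmul_arrl pmul_arrr XA XS ev_app arrv_app)
  ultimately show ?thesis by simp
qed

lemma om_f1: assumes j: "j < n" and gj: "g j = j" shows "dA j + \<mu> j * dS j = 0"
proof -
  note f = fix_facts[OF j gj] and z = fix_zero[OF j gj]
  have "X (prel n j) (sv j, [Star j, Star (pv j)]) = 0"
    by (rule om_nonloop[OF Xprel_om[OF j]]) simp_all
  moreover have "X (prel n j) (sv j, [Star j, Star (pv j)]) = dA j + \<mu> j * dS j"
    using j f gj z gam_fix[OF j gj] by (simp add: Xprel_app pmul_arrl pmul_arrr XA XS ev_app arrv_app)
  ultimately show ?thesis by simp
qed

lemma om_f2: assumes j: "j < n" and gj: "g j = j"
  shows "bA (pv j) - \<mu>s j * dA j + (\<mu> (pv j) * bS (pv j) - dS j) = 0"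
proof -
  note f = fix_facts[OF j gj] and z = fix_zero[OF j gj]
  have "X (prel n (pv j)) (j, [Arr j, Star j]) + X (prel n (pv j)) (j, [Star (pv j), Arr (pv j)]) = 0"
    by (rule om_loop[OF Xprel_om[OF f(7)] j])
  moreover have "X (prel n (pv j)) (j, [Star (pv j), Arr (pv j)]) = bA (pv j) - \<mu>s j * dA j"
    using j f gj z gam_fix[OF j gj] by (simp add: Xprel_app pmul_arrl pmul_arrr XA XS ev_app arrv_app)
  moreover have "X (prel n (pv j)) (j, [Arr j, Star j]) = \<mu> (pv j) * bS (pv j) - dS j"
    using j f gj z gam_fix[OF j gj] by (simp add: Xprel_app pmul_arrl pmul_arrr XA XS ev_app arrv_app)
  ultimately show ?thesis by (simp add: algebra_simps)
qed

end


context TS begin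

lemma X5: assumes "f1 \<in> PA n" "f2 \<in> PA n" "f3 \<in> PA n" "f4 \<in> PA n" "f5 \<in> PA n"
  shows "X (padd (psc a1 f1) (padd (psc a2 f2) (padd (psc a3 f3) (padd (psc a4 f4) (psc a5 f5))))) p
    = a1 * X f1 p + a2 * X f2 p + a3 * X f3 p + a4 * X f4 p + a5 * X f5 p"
proof -
  have P: "psc a1 f1 \<in> PA n" "psc a2 f2 \<in> PA n" "psc a3 f3 \<in> PA n" "psc a4 f4 \<in> PA n" "psc a5 f5 \<in> PA n"
    using assms by (simp_all add: psc_PA)
  have "X (padd (psc a1 f1) (padd (psc a2 f2) (padd (psc a3 f3) (padd (psc a4 f4) (psc a5 f5)))))
    = padd (X (psc a1 f1)) (padd (X (psc a2 f2)) (padd (X (psc a3 f3)) (padd (X (psc a4 f4)) (X (psc a5 f5)))))"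
    using P by (simp only: Xadd padd_PA)
  also have "\<dots> = padd (psc a1 (X f1)) (padd (psc a2 (X f2)) (padd (psc a3 (X f3)) (padd (psc a4 (X f4)) (psc a5 (X f5)))))"
    using assms by (simp only: Xsc)
  finally show ?thesis by (simp add: padd_app psc_app add.assoc)
qed

lemma XA_fun: "i < n \<Longrightarrow> X (av n i) = padd (psc (gam (sv i)) (av n i)) (padd (psc (- (gam i * inverse lam * \<mu> i)) (asv n (g (sv i))))
   (padd (psc (cA i) (ev i)) (padd (psc (bA i) (av n i)) (psc (dA i) (asv n (pv i))))))"
  by (rule ext, case_tac x) (simp add: XA padd_app psc_app)

lemma XXA: assumes i: "i < n"
  shows "X (X (av n i)) p = gam (sv i) * X (av n i) p + (- (gam i * inverse lam * \<mu> i)) * X (asv n (g (sv i))) p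
    + cA i * X (ev i) p + bA i * X (av n i) p + dA i * X (asv n (pv i)) p"
proof -
  have E: "X (X (av n i)) = X (padd (psc (gam (sv i)) (av n i)) (padd (psc (- (gam i * inverse lam * \<mu> i)) (asv n (g (sv i))))
   (padd (psc (cA i) (ev i)) (padd (psc (bA i) (av n i)) (psc (dA i) (asv n (pv i)))))))"
    by (simp only: XA_fun[OF i])
  then show ?thesis by (simp only:) (rule X5, simp_all add: i av_PA asv_PA ev_PA g_lt pv_lt n_pos)
qed

lemma X2a: assumes lm: "lam = -1" and XX: "\<forall>f\<in>PA n. X (X f) = pzero"
  and i: "i < n" and h1: "g i \<noteq> i" and h2: "g (sv i) \<noteq> sv i"
  shows "gam (sv i) ^ 2 = \<mu> i * \<mu>s (g (sv i)) * gam i ^ 2"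
proof -
  let ?q = "g (sv i)"
  have q: "?q < n" by (simp add: g_lt n_pos)
  have sq: "sv ?q = g i" using i by (simp add: g_sv sv_pv g_lt n_pos)
  have gsq: "g (sv ?q) = i" using sq i by (simp add: g_g)
  have z: "bA i = 0" "dA i = 0" using bA_c[OF i] dA_c[OF i] h1 h2 by auto
  have gg: "gam (g i) = - gam i" using gam_rel(2)[OF i] lm by simp
  have "X (X (av n i)) (i, [Arr i]) = 0" using XX[rule_format, OF av_PA[OF i]] by (simp add: pzero_app)
  moreover have "X (av n i) (i, [Arr i]) = gam (sv i)" using i z by (simp add: XA ev_app arrv_app)
  moreover have "X (asv n ?q) (i, [Arr i]) = - gam (g i) * inverse lam * \<mu>s ?q"
    using q sq gsq h1 by (simp add: XS ev_app arrv_app)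
  moreover have "X (ev i) (i, [Arr i]) = 0" using i by (simp add: Xev_app)
  ultimately have "0 = gam (sv i) * gam (sv i) + (- (gam i * inverse lam * \<mu> i)) * (- gam (g i) * inverse lam * \<mu>s ?q)"
    using XXA[OF i, of "(i, [Arr i])"] z by simp
  then show ?thesis using gg lm by (simp add: power2_eq_square algebra_simps)
qed

lemma X2f: assumes lm: "lam = -1" and XX: "\<forall>f\<in>PA n. X (X f) = pzero"
  and j: "j < n" and gj: "g j = j"
  shows "bA (pv j) ^ 2 = gam (pv j) ^ 2 * \<mu> (pv j) * \<mu>s j"
proof -
  note f = fix_facts[OF j gj] and zz = fix_zero[OF j gj]
  let ?p = "pv j"
  have gj0: "gam j = 0" by (rule gam_fix[OF j gj])
  have gg: "gam (sv j) = - gam ?p" using gam_rel(2)[OF f(7)] lm f by simp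
  have "X (X (av n ?p)) (?p, [Arr ?p]) = 0" using XX[rule_format, OF av_PA[OF f(7)]] by (simp add: pzero_app)
  moreover have "X (av n ?p) (?p, [Arr ?p]) = bA ?p" using f zz gj0 by (simp add: XA ev_app arrv_app)
  moreover have "X (asv n j) (?p, [Arr ?p]) = - gam (sv j) * inverse lam * \<mu>s j"
    using j f zz by (simp add: XS ev_app arrv_app)
  ultimately have "0 = (- (gam ?p * inverse lam * \<mu> ?p)) * (- gam (sv j) * inverse lam * \<mu>s j) + bA ?p * bA ?p"
    using XXA[OF f(7), of "(?p, [Arr ?p])"] f zz gj0 gj by simp
  then show ?thesis using gg lm by (simp add: power2_eq_square algebra_simps)
qed

end


definition deg1 :: "('k::field) taft \<Rightarrow> nat \<Rightarrow> bool" where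
  "deg1 f k \<longleftrightarrow> (\<forall>z. f z \<noteq> 0 \<longrightarrow> snd z = k)"
definition deg2 :: "('k::field) taft2 \<Rightarrow> nat \<Rightarrow> bool" where
  "deg2 F k \<longleftrightarrow> (\<forall>p q. F (p, q) \<noteq> 0 \<longrightarrow> snd p + snd q = k)"

lemma tcoef_nz: "tcoef lam m r z1 z2 z \<noteq> 0 \<Longrightarrow> (fst z1 + fst z2) mod m = fst z \<and> snd z1 + snd z2 = snd z \<and> snd z < r"
  by (simp add: tcoef_def split: if_splits)

lemma tcoef_Tidx: "0 < m \<Longrightarrow> tcoef lam m r z1 z2 z \<noteq> 0 \<Longrightarrow> z \<in> Tidx m r"
  using tcoef_nz[of lam m r z1 z2 z] by (cases z) (auto simp: Tidx_def)

lemma sum_nz: "sum f A \<noteq> 0 \<Longrightarrow> \<exists>a\<in>A. f a \<noteq> 0"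
  by (meson sum.neutral)

lemma tmul_nz: "tmul lam m r f h z \<noteq> 0 \<Longrightarrow> \<exists>z1 z2. f z1 \<noteq> 0 \<and> h z2 \<noteq> 0 \<and> tcoef lam m r z1 z2 z \<noteq> 0"
proof -
  assume "tmul lam m r f h z \<noteq> 0"
  then obtain z1 where "(\<Sum>z2 \<in> Tidx m r. f z1 * h z2 * tcoef lam m r z1 z2 z) \<noteq> 0"
    unfolding tmul_def using sum_nz by blast
  then obtain z2 where "f z1 * h z2 * tcoef lam m r z1 z2 z \<noteq> 0" using sum_nz by blast
  then have "f z1 \<noteq> 0 \<and> h z2 \<noteq> 0 \<and> tcoef lam m r z1 z2 z \<noteq> 0" by simp
  then show ?thesis by blast
qed

lemma tmul_deg: assumes F: "deg1 f a" and H: "deg1 h b" shows "deg1 (tmul lam m r f h) (a + b)"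
  unfolding deg1_def
proof (intro allI impI)
  fix z assume "tmul lam m r f h z \<noteq> 0"
  then obtain z1 z2 where a: "f z1 \<noteq> 0" "h z2 \<noteq> 0" "tcoef lam m r z1 z2 z \<noteq> 0" using tmul_nz by blast
  have "snd z1 = a" using F a(1) unfolding deg1_def by blast
  moreover have "snd z2 = b" using H a(2) unfolding deg1_def by blast
  ultimately show "snd z = a + b" using tcoef_nz[OF a(3)] by simp
qed

lemma tmul_Tcar: assumes m: "0 < m" shows "tmul lam m r f h \<in> Tcar m r"
  unfolding Tcar_def mem_Collect_eq
proof (intro allI impI)
  fix z assume "tmul lam m r f h z \<noteq> 0"
  then obtain z1 z2 where "tcoef lam m r z1 z2 z \<noteq> 0" using tmul_nz by blast
  then show "z \<in> Tidx m r" by (rule tcoef_Tidx[OF m])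
qed

lemma tdelta_deg: "deg1 (tdelta z) (snd z)" by (auto simp: deg1_def tdelta_def)

lemma tpow_deg: assumes F: "deg1 f d" shows "deg1 (tpow lam m r f k) (k * d)"
proof (induction k)
  case 0 then show ?case using tdelta_deg[of "(0,0)"] by (simp add: tpow_def tone_def)
next
  case (Suc k)
  have "tpow lam m r f (Suc k) = tmul lam m r f (tpow lam m r f k)" by (simp add: tpow_def)
  then show ?case using tmul_deg[OF F Suc.IH] by (simp add: add.commute)
qed

lemma ttmul_nz: "ttmul lam m r F H (p, q) \<noteq> 0 \<Longrightarrow> \<exists>p1 q1 p2 q2. F (p1, q1) \<noteq> 0 \<and> H (p2, q2) \<noteq> 0 \<and> tcoef lam m r p1 p2 p \<noteq> 0 \<and> tcoef lam m r q1 q2 q \<noteq> 0"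
proof -
  assume "ttmul lam m r F H (p, q) \<noteq> 0"
  then obtain p1 q1 p2 q2 where "F (p1, q1) * H (p2, q2) * tcoef lam m r p1 p2 p * tcoef lam m r q1 q2 q \<noteq> 0"
    unfolding ttmul_def by (auto dest!: sum_nz)
  then have "F (p1, q1) \<noteq> 0 \<and> H (p2, q2) \<noteq> 0 \<and> tcoef lam m r p1 p2 p \<noteq> 0 \<and> tcoef lam m r q1 q2 q \<noteq> 0" by simp
  then show ?thesis by blast
qed

lemma ttmul_deg: "deg2 F a \<Longrightarrow> deg2 H b \<Longrightarrow> deg2 (ttmul lam m r F H) (a + b)"
proof -
  assume F: "deg2 F a" and H: "deg2 H b"
  show ?thesis unfolding deg2_def
  proof (intro allI impI)
    fix p q assume "ttmul lam m r F H (p, q) \<noteq> 0"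
    then obtain p1 q1 p2 q2 where c: "F (p1, q1) \<noteq> 0" "H (p2, q2) \<noteq> 0" "tcoef lam m r p1 p2 p \<noteq> 0" "tcoef lam m r q1 q2 q \<noteq> 0"
      using ttmul_nz by blast
    have "snd p1 + snd q1 = a" using F c(1) unfolding deg2_def by blast
    moreover have "snd p2 + snd q2 = b" using H c(2) unfolding deg2_def by blast
    ultimately show "snd p + snd q = a + b" using tcoef_nz[OF c(3)] tcoef_nz[OF c(4)] by simp
  qed
qed

lemma ttmul_Tidx: assumes m: "0 < m" and nz: "ttmul lam m r F H (p, q) \<noteq> 0" shows "p \<in> Tidx m r \<and> q \<in> Tidx m r"
proof -
  obtain p1 q1 p2 q2 where "tcoef lam m r p1 p2 p \<noteq> 0" "tcoef lam m r q1 q2 q \<noteq> 0" using ttmul_nz[OF nz] by blast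
  then show ?thesis using tcoef_Tidx[OF m] by blast
qed

lemma ttpow_deg: assumes F: "deg2 F d" shows "deg2 (ttpow lam m r F k) (k * d)"
proof (induction k)
  case 0 then show ?case by (simp add: ttpow_def deg2_def ttensor_def tone_def tdelta_def)
next
  case (Suc k)
  have "ttpow lam m r F (Suc k) = ttmul lam m r F (ttpow lam m r F k)" by (simp add: ttpow_def)
  then show ?case using ttmul_deg[OF F Suc.IH] by (simp add: add.commute)
qed

definition Iid :: "nat \<Rightarrow> nat \<Rightarrow> ('k::field) taft set" where
  "Iid m r = {h. h \<in> Tcar m r \<and> (\<forall>a. h (a, 0) = 0)}"

lemma Iid_pos: assumes h: "h \<in> Iid m r" and hz: "h z \<noteq> 0" shows "snd z \<noteq> 0"
proof
  assume "snd z = 0"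
  then have "z = (fst z, 0)" by (cases z) simp
  then have "h z = 0" using h unfolding Iid_def by (metis (mono_tags, lifting) mem_Collect_eq)
  then show False using hz by simp
qed

lemma tDelta_deg: assumes h: "h \<in> Iid m r" and nz: "tDelta lam m r h (p, q) \<noteq> 0"
  shows "snd p + snd q \<noteq> 0"
proof -
  let ?Dg = "ttensor (tdelta (1, 0)) (tdelta (1, 0)) :: 'a taft2"
  let ?Dx = "(\<lambda>w'. ttensor (tdelta (0, 0)) (tdelta (0, 1)) w' + ttensor (tdelta (0, 1)) (tdelta (1, 0)) w') :: 'a taft2"
  obtain z where hz: "h z \<noteq> 0" and tz: "ttmul lam m r (ttpow lam m r ?Dg (fst z)) (ttpow lam m r ?Dx (snd z)) (p, q) \<noteq> 0"
    using nz unfolding tDelta_def by (auto dest!: sum_nz)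
  have d0: "deg2 ?Dg 0" by (simp add: deg2_def ttensor_def tdelta_def)
  have d1: "deg2 ?Dx 1" by (simp add: deg2_def ttensor_def tdelta_def)
  have "deg2 (ttmul lam m r (ttpow lam m r ?Dg (fst z)) (ttpow lam m r ?Dx (snd z))) (fst z * 0 + snd z * 1)"
    by (rule ttmul_deg[OF ttpow_deg[OF d0] ttpow_deg[OF d1]])
  then have D: "deg2 (ttmul lam m r (ttpow lam m r ?Dg (fst z)) (ttpow lam m r ?Dx (snd z))) (snd z)" by simp
  have "snd p + snd q = snd z" using D tz unfolding deg2_def by blast
  then show ?thesis using Iid_pos[OF h hz] by simp
qed

lemma tDelta_Tidx: assumes m: "0 < m" and nz: "tDelta lam m r h (p, q) \<noteq> 0"
  shows "p \<in> Tidx m r \<and> q \<in> Tidx m r"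
proof -
  obtain z where "ttmul lam m r (ttpow lam m r (ttensor (tdelta (1, 0)) (tdelta (1, 0))) (fst z))
      (ttpow lam m r (\<lambda>w'. ttensor (tdelta (0, 0)) (tdelta (0, 1)) w' + ttensor (tdelta (0, 1)) (tdelta (1, 0)) w') (snd z)) (p, q) \<noteq> 0"
    using nz unfolding tDelta_def by (auto dest!: sum_nz)
  then show ?thesis using ttmul_Tidx[OF m] by blast
qed

lemma tS_I: assumes m: "0 < m" and h: "h \<in> Iid m r" shows "tS lam m r h \<in> Iid m r"
proof -
  let ?Sx = "(\<lambda>w'. - tmul lam m r (tdelta (0, 1)) (tdelta (m - 1, 0)) w') :: 'a taft"
  let ?Sg = "tdelta (m - 1, 0) :: 'a taft"
  have dx: "deg1 ?Sx 1"
  proof -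
    have "deg1 (tmul lam m r (tdelta (0, 1)) (tdelta (m - 1, 0)) :: 'a taft) (1 + 0)"
      by (rule tmul_deg) (simp_all add: deg1_def tdelta_def)
    then show ?thesis by (simp add: deg1_def)
  qed
  have dg: "deg1 ?Sg 0" by (simp add: deg1_def tdelta_def)
  have A: "\<exists>z. h z \<noteq> 0 \<and> tmul lam m r (tpow lam m r ?Sx (snd z)) (tpow lam m r ?Sg (fst z)) w \<noteq> 0"
    if nzw: "tS lam m r h w \<noteq> 0" for w
  proof -
    have "(\<Sum>z\<in>Tidx m r. h z * tmul lam m r (tpow lam m r ?Sx (snd z)) (tpow lam m r ?Sg (fst z)) w) \<noteq> 0"
      using nzw unfolding tS_def .
    then obtain z where "h z * tmul lam m r (tpow lam m r ?Sx (snd z)) (tpow lam m r ?Sg (fst z)) w \<noteq> 0"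
      using sum_nz by blast
    then show ?thesis by (intro exI[of _ z]) simp
  qed
  show ?thesis unfolding Iid_def
  proof (intro CollectI conjI allI)
    show "tS lam m r h \<in> Tcar m r" unfolding Tcar_def mem_Collect_eq
    proof (intro allI impI)
      fix w assume "tS lam m r h w \<noteq> 0"
      then obtain z where "tmul lam m r (tpow lam m r ?Sx (snd z)) (tpow lam m r ?Sg (fst z)) w \<noteq> 0" using A by blast
      then show "w \<in> Tidx m r" using tmul_Tcar[OF m] unfolding Tcar_def by blast
    qed
  next
    fix a show "tS lam m r h (a, 0) = 0"
    proof (rule ccontr)
      assume "tS lam m r h (a, 0) \<noteq> 0"
      then obtain z where hz: "h z \<noteq> 0" and t: "tmul lam m r (tpow lam m r ?Sx (snd z)) (tpow lam m r ?Sg (fst z)) (a, 0) \<noteq> 0"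
        using A by blast
      have "deg1 (tmul lam m r (tpow lam m r ?Sx (snd z)) (tpow lam m r ?Sg (fst z))) (snd z * 1 + fst z * 0)"
        by (rule tmul_deg[OF tpow_deg[OF dx] tpow_deg[OF dg]])
      then have D: "deg1 (tmul lam m r (tpow lam m r ?Sx (snd z)) (tpow lam m r ?Sg (fst z))) (snd z)" by simp
      have "snd (a, 0::nat) = snd z" using D t unfolding deg1_def by blast
      then have "snd z = 0" by simp
      then show False using Iid_pos[OF h hz] by simp
    qed
  qed
qed

lemma tmul_I: assumes m: "0 < m" and h: "h \<in> Iid m r"
  shows "tmul lam m r h t \<in> Iid m r" "tmul lam m r t h \<in> Iid m r"
proof -
  show "tmul lam m r h t \<in> Iid m r" unfolding Iid_def
  proof (intro CollectI conjI allI)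
    show "tmul lam m r h t \<in> Tcar m r" by (rule tmul_Tcar[OF m])
    fix a show "tmul lam m r h t (a, 0) = 0"
    proof (rule ccontr)
      assume "tmul lam m r h t (a, 0) \<noteq> 0"
      then obtain z1 z2 where "h z1 \<noteq> 0" "tcoef lam m r z1 z2 (a, 0) \<noteq> 0" using tmul_nz by blast
      then show False using Iid_pos[OF h] tcoef_nz by fastforce
    qed
  qed
  show "tmul lam m r t h \<in> Iid m r" unfolding Iid_def
  proof (intro CollectI conjI allI)
    show "tmul lam m r t h \<in> Tcar m r" by (rule tmul_Tcar[OF m])
    fix a show "tmul lam m r t h (a, 0) = 0"
    proof (rule ccontr)
      assume "tmul lam m r t h (a, 0) \<noteq> 0"
      then obtain z1 z2 where "h z2 \<noteq> 0" "tcoef lam m r z1 z2 (a, 0) \<noteq> 0" using tmul_nz by blast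
      then show False using Iid_pos[OF h] tcoef_nz by fastforce
    qed
  qed
qed


lemma tdelta_Iid: "p \<in> Tidx m r \<Longrightarrow> snd p \<noteq> 0 \<Longrightarrow> (tdelta p :: 'k::field taft) \<in> Iid m r"
  by (cases p) (auto simp: Iid_def Tcar_def tdelta_def)
lemma tdelta_Tcar: "p \<in> Tidx m r \<Longrightarrow> (tdelta p :: 'k::field taft) \<in> Tcar m r"
  by (auto simp: Tcar_def tdelta_def)

lemma tDelta_lspan: assumes m: "0 < m" and h: "h \<in> Iid m r"
  shows "tDelta lam m r h \<in> lspan ({ttensor u v | u v. u \<in> Iid m r \<and> v \<in> Tcar m r} \<union>
               {ttensor u v | u v. u \<in> Tcar m r \<and> v \<in> Iid m r})"
proof -
  let ?F = "tDelta lam m r h"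
  let ?TI = "List.product [0..<m] [0..<r]"
  let ?PL = "filter (\<lambda>(p, q). snd p \<noteq> 0 \<or> snd q \<noteq> 0) (List.product ?TI ?TI)"
  let ?l = "map (\<lambda>(p, q). (?F (p, q), ttensor (tdelta p) (tdelta q))) ?PL"
  have setTI: "set ?TI = Tidx m r" by (auto simp: Tidx_def)
  have dPL: "distinct ?PL" by (simp add: distinct_product)
  have setPL: "set ?PL = {(p, q). p \<in> Tidx m r \<and> q \<in> Tidx m r \<and> (snd p \<noteq> 0 \<or> snd q \<noteq> 0)}"
    using setTI by auto
  have S: "set (map snd ?l) \<subseteq> {ttensor u v | u v. u \<in> Iid m r \<and> v \<in> Tcar m r} \<union>
               {ttensor u v | u v. u \<in> Tcar m r \<and> v \<in> Iid m r}"
  proof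
    fix x assume "x \<in> set (map snd ?l)"
    then obtain y where y: "y \<in> set ?PL" and x0: "x = ttensor (tdelta (fst y)) (tdelta (snd y))"
      by (auto simp: case_prod_beta)
    obtain p q where yy: "y = (p, q)" by (cases y)
    have pq: "(p, q) \<in> set ?PL" and x: "x = ttensor (tdelta p) (tdelta q)" using y x0 yy by auto
    then have pq': "p \<in> Tidx m r" "q \<in> Tidx m r" "snd p \<noteq> 0 \<or> snd q \<noteq> 0" using setPL by auto
    show "x \<in> {ttensor u v | u v. u \<in> Iid m r \<and> v \<in> Tcar m r} \<union> {ttensor u v | u v. u \<in> Tcar m r \<and> v \<in> Iid m r}"
    proof (cases "snd p \<noteq> 0")
      case True then show ?thesis using x pq' tdelta_Iid tdelta_Tcar by blast
    next
      case False then show ?thesis using x pq' tdelta_Iid tdelta_Tcar by blast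
    qed
  qed
  have E: "?F = (\<lambda>z. sum_list (map (\<lambda>(c, u). c * u z) ?l))"
  proof (rule ext)
    fix z :: "(nat \<times> nat) \<times> (nat \<times> nat)"
    obtain p0 q0 where z: "z = (p0, q0)" by (cases z)
    have "sum_list (map (\<lambda>(c, u). c * u z) ?l) = sum_list (map (\<lambda>x. ?F x * (if x = z then 1 else 0)) ?PL)"
      unfolding map_map
      apply (rule arg_cong[where f=sum_list])
      apply (rule map_cong[OF refl])
      by (auto simp: ttensor_def tdelta_def z split: prod.splits)
    also have "\<dots> = (\<Sum>x \<in> set ?PL. ?F x * (if x = z then 1 else 0))"
      by (rule sum_list_distinct_conv_sum_set[OF dPL])
    also have "\<dots> = (\<Sum>x \<in> set ?PL. if x = z then ?F x else 0)"
      by (rule sum.cong) auto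
    also have "\<dots> = (if z \<in> set ?PL then ?F z else 0)"
      by (simp add: sum.delta')
    also have "\<dots> = ?F z"
    proof (cases "?F z = 0")
      case False
      then have "p0 \<in> Tidx m r \<and> q0 \<in> Tidx m r" using tDelta_Tidx[OF m] z by blast
      moreover have "snd p0 + snd q0 \<noteq> 0" using tDelta_deg[OF h, of lam p0 q0] False z by simp
      ultimately have "z \<in> set ?PL" using setPL z by auto
      then show ?thesis by simp
    qed simp
    finally show "?F z = sum_list (map (\<lambda>(c, u). c * u z) ?l)" by simp
  qed
  show ?thesis unfolding lspan_def using S E by blast
qed

lemma Tcar_add: "h \<in> Tcar m r \<Longrightarrow> h' \<in> Tcar m r \<Longrightarrow> (\<lambda>z. h z + h' z) \<in> Tcar m r"
proof -
  assume a: "h \<in> Tcar m r" "h' \<in> Tcar m r"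
  show ?thesis unfolding Tcar_def mem_Collect_eq
  proof (intro allI impI)
    fix z assume "h z + h' z \<noteq> 0"
    then have "h z \<noteq> 0 \<or> h' z \<noteq> 0" by auto
    then show "z \<in> Tidx m r" using a unfolding Tcar_def by blast
  qed
qed

lemma Iid_hopf: fixes lam :: "'k::field" assumes m: "0 < m" shows "hopf_ideal lam m r (Iid m r)"
  unfolding hopf_ideal_def
proof (intro conjI ballI allI)
  show "Iid m r \<subseteq> Tcar m r" by (auto simp: Iid_def)
  show "(\<lambda>_. 0) \<in> Iid m r" by (simp add: Iid_def Tcar_def)
next
  fix h h' :: "'k taft" assume "h \<in> Iid m r" "h' \<in> Iid m r"
  then show "(\<lambda>z. h z + h' z) \<in> Iid m r" using Tcar_add[of h m r h'] by (auto simp: Iid_def)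
next
  fix c :: 'k and h :: "'k taft" assume "h \<in> Iid m r"
  then show "(\<lambda>z. c * h z) \<in> Iid m r" by (auto simp: Iid_def Tcar_def)
next
  fix h t :: "'k taft" assume "h \<in> Iid m r" "t \<in> Tcar m r"
  then show "tmul lam m r h t \<in> Iid m r" "tmul lam m r t h \<in> Iid m r" using tmul_I[OF m] by blast+
next
  fix h :: "'k taft" assume "h \<in> Iid m r"
  then show "teps m r h = 0" by (simp add: teps_def Iid_def)
next
  fix h :: "'k taft" assume "h \<in> Iid m r"
  then show "tDelta lam m r h \<in> lspan ({ttensor u v | u v. u \<in> Iid m r \<and> v \<in> Tcar m r} \<union>
               {ttensor u v | u v. u \<in> Tcar m r \<and> v \<in> Iid m r})" by (rule tDelta_lspan[OF m])
next
  fix h :: "'k taft" assume "h \<in> Iid m r"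
  then show "tS lam m r h \<in> Iid m r" by (rule tS_I[OF m])
qed

context TS begin

lemma X_bas_zero: assumes Z: "\<forall>i<n. X (ev i) = pzero \<and> X (av n i) = pzero \<and> X (asv n i) = pzero"
  shows "path_ok n (v, l) \<Longrightarrow> X (bas (v, l)) = pzero"
proof (induction l arbitrary: v)
  case Nil
  then have "v < n" by simp
  then show ?case using Z by (simp add: ev_def)
next
  case (Cons b bs)
  have pb: "arr_idx b < n" "src n b = v" "path_ok n (tgt n b, bs)" "v < n" using Cons.prems by auto
  have E: "bas (v, b # bs) = pmul n (arrv n b) (bas (tgt n b, bs))"
    by (rule ext, case_tac x) (auto simp: pmul_arrl bas_app pb(2))
  have Xb: "X (arrv n b) = pzero" using Z pb(1) by (cases b) auto
  have "X (bas (v, b # bs)) = padd (pmul n (arrv n b) (X (bas (tgt n b, bs)))) (pmul n (X (arrv n b)) (G (bas (tgt n b, bs))))"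
    unfolding E by (rule Xmul) (simp_all add: arrv_PA pb bas_PA)
  also have "\<dots> = pzero" using Cons.IH[OF pb(3)] Xb by (simp add: pmul_zero_l pmul_zero_r) (simp add: padd_def pzero_def)
  finally show ?case .
qed

lemma X_all_zero: assumes Z: "\<forall>i<n. X (ev i) = pzero \<and> X (av n i) = pzero \<and> X (asv n i) = pzero"
  shows "f \<in> PA n \<Longrightarrow> X f = pzero"
proof -
  have main: "\<And>S. finite S \<Longrightarrow> \<forall>f. f \<in> PA n \<and> {p. f p \<noteq> 0} \<subseteq> S \<longrightarrow> X f = pzero"
  proof -
    fix S :: "path set" assume "finite S"
    then show "\<forall>f. f \<in> PA n \<and> {p. f p \<noteq> 0} \<subseteq> S \<longrightarrow> X f = pzero"
    proof (induction S rule: finite_induct)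
      case empty
      show ?case
      proof (intro allI impI)
        fix f :: "'k pa" assume "f \<in> PA n \<and> {p. f p \<noteq> 0} \<subseteq> {}"
        then have "f = pzero" by (auto simp: pzero_def)
        then show "X f = pzero" by (simp add: Xzero)
      qed
    next
      case (insert q S)
      show ?case
      proof (intro allI impI)
        fix f :: "'k pa" assume f: "f \<in> PA n \<and> {p. f p \<noteq> 0} \<subseteq> insert q S"
        let ?f' = "f(q := 0)"
        have f'P: "?f' \<in> PA n"
        proof -
          have "{p. ?f' p \<noteq> 0} \<subseteq> {p. f p \<noteq> 0}" by auto
          then show ?thesis using f unfolding PA_def by (auto intro: finite_subset)
        qed
        have f'S: "{p. ?f' p \<noteq> 0} \<subseteq> S" using f by auto
        have X': "X ?f' = pzero" using insert.IH f'P f'S by blast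
        show "X f = pzero"
        proof (cases "f q = 0")
          case True
          then have "f = ?f'" by auto
          then show ?thesis using X' by simp
        next
          case False
          then have pq: "path_ok n q" using PA_path[of f q] f by blast
          obtain v l where q: "q = (v, l)" by (cases q)
          have fe: "f = padd (psc (f q) (bas q)) ?f'"
            by (rule ext) (simp add: padd_def psc_def bas_def)
          have "X f = padd (psc (f q) (X (bas q))) (X ?f')"
            by (subst fe) (simp add: Xadd Xsc bas_PA pq psc_PA f'P)
          also have "\<dots> = pzero" using X' X_bas_zero[OF Z] pq q by (simp add: padd_def psc_def pzero_def)
          finally show ?thesis .
        qed
      qed
    qed
  qed
  assume f: "f \<in> PA n"
  then have "finite {p. f p \<noteq> 0}" by (simp add: PA_def)
  then show "X f = pzero" using main f by blast
qed

lemma gens_zero_False: assumes Z: "\<forall>i<n. X (ev i) = pzero \<and> X (av n i) = pzero \<and> X (asv n i) = pzero"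
  shows False
proof -
  have XZ: "\<And>f. f \<in> PA n \<Longrightarrow> X f = pzero" by (rule X_all_zero[OF Z])
  have Xk: "\<And>k f. f \<in> PA n \<Longrightarrow> 0 < k \<Longrightarrow> (X ^^ k) f = pzero"
  proof -
    fix k :: nat and f :: "'k pa" assume f: "f \<in> PA n" and k: "0 < k"
    show "(X ^^ k) f = pzero" using k
    proof (induction k)
      case 0 then show ?case by simp
    next
      case (Suc k)
      show ?case
      proof (cases k)
        case 0 then show ?thesis using XZ[OF f] by simp
      next
        case (Suc k')
        then have "(X ^^ k) f = pzero" using Suc.IH by simp
        then show ?thesis using Xzero by simp
      qed
    qed
  qed
  have Gk: "\<And>k. (G ^^ k) pzero = pzero"
  proof -
    fix k show "(G ^^ k) pzero = pzero" by (induction k) (simp_all add: Gzero)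
  qed
  have hI: "hopf_ideal lam m r (Iid m r)" by (rule Iid_hopf[OF m_pos])
  have t1: "(tdelta (0, 1) :: 'k taft) \<in> Iid m r" using m_pos r_gt1 by (simp add: tdelta_Iid Tidx_def)
  have t2: "(tdelta (0, 1) :: 'k taft) \<noteq> (\<lambda>_. 0)"
  proof
    assume "(tdelta (0, 1) :: 'k taft) = (\<lambda>_. 0)"
    then have "(tdelta (0, 1) :: 'k taft) (0, 1) = 0" by simp
    then show False by (simp add: tdelta_def)
  qed
  have nz: "\<exists>h\<in>Iid m r. h \<noteq> (\<lambda>_. (0::'k))" using t1 t2 by blast
  have act: "\<forall>h\<in>Iid m r. \<forall>f\<in>PA n. tact m r G X h f = pzero"
  proof (intro ballI)
    fix h :: "'k taft" and f :: "'k pa" assume h: "h \<in> Iid m r" and f: "f \<in> PA n"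
    show "tact m r G X h f = pzero"
    proof (rule ext)
      fix p
      have "\<And>z. h z * (G ^^ fst z) ((X ^^ snd z) f) p = 0"
      proof -
        fix z show "h z * (G ^^ fst z) ((X ^^ snd z) f) p = 0"
        proof (cases "h z = 0")
          case False
          then have "snd z \<noteq> 0" by (rule Iid_pos[OF h])
          then have "(X ^^ snd z) f = pzero" using Xk[OF f] by simp
          then show ?thesis using Gk by (simp add: pzero_def)
        qed simp
      qed
      then have "(\<Sum>z\<in>Tidx m r. h z * (G ^^ fst z) ((X ^^ snd z) f) p) = 0" by (intro sum.neutral) blast
      then show "tact m r G X h f p = pzero p" by (simp add: tact_def pzero_def)
    qed
  qed
  show False using inner hI nz act unfolding inner_faithful_def by blast
qed

end


context TS begin

lemma zero_gens:
  assumes G0: "\<forall>i<n. gam i = 0"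
    and K0: "\<forall>k<n. g k = sv k \<longrightarrow> cA k = 0 \<and> cS k = 0"
    and F0: "\<forall>j<n. g j = j \<longrightarrow> bA (pv j) = 0 \<and> dA j = 0 \<and> bS (pv j) = 0 \<and> dS j = 0"
  shows "\<forall>i<n. X (ev i) = pzero \<and> X (av n i) = pzero \<and> X (asv n i) = pzero"
proof (intro allI impI conjI)
  fix i assume i: "i < n"
  have si: "sv i < n" by (simp add: sv_lt n_pos)
  have gi: "g i < n" by (simp add: g_lt n_pos)
  have zA: "cA i = 0" "bA i = 0" "dA i = 0" "cS i = 0" "bS i = 0" "dS i = 0"
  proof -
    show "cA i = 0"
    proof (rule ccontr)
      assume "cA i \<noteq> 0" then have "g i = sv i" using cA_c[OF i] k_iff[OF i] by simp
      then show False using K0 i \<open>cA i \<noteq> 0\<close> by blast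
    qed
    show "bA i = 0"
    proof (rule ccontr)
      assume nz: "bA i \<noteq> 0" then have "g (sv i) = sv i" using bA_c[OF i] by simp
      then have "bA (pv (sv i)) = 0" using F0 si by blast
      then show False using nz i by (simp add: pv_sv)
    qed
    show "dA i = 0"
    proof (rule ccontr)
      assume nz: "dA i \<noteq> 0" then have "g i = i" using dA_c[OF i] by simp
      then show False using F0 i nz by blast
    qed
    show "cS i = 0"
    proof (rule ccontr)
      assume "cS i \<noteq> 0" then have "g i = sv i" using cS_c[OF i] by simp
      then show False using K0 i \<open>cS i \<noteq> 0\<close> by blast
    qed
    show "bS i = 0"
    proof (rule ccontr)
      assume nz: "bS i \<noteq> 0" then have "g (sv i) = sv i" using bS_c[OF i] by simp
      then have "bS (pv (sv i)) = 0" using F0 si by blast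
      then show False using nz i by (simp add: pv_sv)
    qed
    show "dS i = 0"
    proof (rule ccontr)
      assume nz: "dS i \<noteq> 0" then have "g i = i" using dS_c[OF i] by simp
      then show False using F0 i nz by blast
    qed
  qed
  have g0: "gam i = 0" "gam (sv i) = 0" "gam (g i) = 0" using G0 i si gi by auto
  show "X (ev i) = pzero" unfolding Xev_form[OF i] using g0 by (rule_tac ext) (simp add: padd_app psc_app pzero_app)
  show "X (av n i) = pzero" by (rule ext, case_tac x) (simp add: XA[OF i] zA g0 pzero_app)
  show "X (asv n i) = pzero" by (rule ext, case_tac x) (simp add: XS[OF i] zA g0 pzero_app)
qed

lemma lam_sq: "lam * lam = 1"
proof (rule ccontr)
  assume L: "lam * lam \<noteq> 1"
  have lm1: "lam \<noteq> -1" using L by auto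
  have G0: "\<forall>i<n. gam i = 0"
  proof (intro allI impI)
    fix i assume i: "i < n"
    have "gam i = lam * gam (g i)" by (rule gam_rel(1)[OF i])
    also have "\<dots> = lam * (lam * gam i)" using gam_rel(2)[OF i] by simp
    finally have "gam i = lam * (lam * gam i)" .
    then have "(1 - lam * lam) * gam i = 0" by (simp add: algebra_simps)
    then show "gam i = 0" using L by simp
  qed
  have K0: "\<forall>k<n. g k = sv k \<longrightarrow> cA k = 0 \<and> cS k = 0"
  proof (intro allI impI)
    fix k assume k: "k < n" and gk: "g k = sv k"
    have e1: "cA k = lam * \<mu> k * cS k" by (rule eqk1[OF k gk])
    have e2: "cA k + \<mu> k * cS k = 0" by (rule om_k[OF k gk])
    have "(lam + 1) * (\<mu> k * cS k) = 0" using e1 e2 by (simp add: algebra_simps)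
    moreover have l1: "lam + 1 \<noteq> 0"
    proof
      assume "lam + 1 = 0" then have "lam = -1" by (simp add: eq_neg_iff_add_eq_0)
      with lm1 show False by simp
    qed
    ultimately have "\<mu> k * cS k = 0" by simp
    then have "cS k = 0" using mu_nz'(1)[OF k] by simp
    then show "cA k = 0 \<and> cS k = 0" using e1 by simp
  qed
  have F0: "\<forall>j<n. g j = j \<longrightarrow> bA (pv j) = 0 \<and> dA j = 0 \<and> bS (pv j) = 0 \<and> dS j = 0"
  proof (intro allI impI)
    fix j assume j: "j < n" and gj: "g j = j"
    note f = fix_facts[OF j gj]
    have a1: "bA (pv j) = lam * dS j" by (rule eqf1[OF j gj])
    have a2: "dS j = lam * bA (pv j)" by (rule eqf2[OF j gj])
    have a3: "dA j * \<mu>s (pv j) = lam * \<mu> j * bS (pv j)" by (rule eqf3[OF j gj])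
    have a4: "bS (pv j) * \<mu> j = lam * \<mu>s (pv j) * dA j" by (rule eqf4[OF j gj])
    have "(1 - lam * lam) * bA (pv j) = 0" using a1 a2 by (simp add: algebra_simps)
    then have b0: "bA (pv j) = 0" using L by simp
    have "dA j * \<mu>s (pv j) = lam * (lam * \<mu>s (pv j) * dA j)" using a3 a4 by (simp add: algebra_simps)
    then have "(1 - lam * lam) * (\<mu>s (pv j) * dA j) = 0" by (simp add: algebra_simps)
    then have d0: "dA j = 0" using L mu_nz'(2)[OF f(7)] by simp
    have "bS (pv j) = 0" using a4 d0 mu_nz'(1)[OF j] by simp
    then show "bA (pv j) = 0 \<and> dA j = 0 \<and> bS (pv j) = 0 \<and> dS j = 0" using b0 d0 a2 by simp
  qed
  show False using gens_zero_False zero_gens[OF G0 K0 F0] by blast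
qed

lemma lam_m1: "lam = -1"
proof -
  have "lam ^ 1 \<noteq> 1" using lam_prim2 r_gt1 by blast
  then have "lam \<noteq> 1" by simp
  moreover have "(lam - 1) * (lam + 1) = 0" using lam_sq by (simp add: algebra_simps)
  ultimately have "lam + 1 = 0" by simp
  then show ?thesis by (simp add: eq_neg_iff_add_eq_0)
qed

lemma r2: "r = 2"
proof (rule ccontr)
  assume "r \<noteq> 2"
  then have "2 < r" using r_gt1 by simp
  then have "lam ^ 2 \<noteq> 1" using lam_prim2[rule_format, of 2] by simp
  then show False using lam_sq by (simp add: power2_eq_square)
qed

lemma two_nz: "(2::'k) \<noteq> 0" using r_char r2 by simp

lemma XX: "\<forall>f\<in>PA n. X (X f) = pzero"
  using Xr r2 by (simp add: numeral_2_eq_2)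

lemma CC_const: "i < n \<Longrightarrow> CC i = CC 0"
proof (induction i)
  case 0 then show ?case by simp
next
  case (Suc i)
  then have "sv i = Suc i" by (simp add: suc_v_def)
  then show ?case using CC_step[of i] Suc by simp
qed

lemma gam_chain:
  assumes P0: "\<exists>v0<n. gam v0 = 0" and step: "\<And>i. i < n \<Longrightarrow> gam i = 0 \<Longrightarrow> gam (sv i) = 0"
  shows "\<forall>i<n. gam i = 0"
proof -
  obtain v0 where v0: "v0 < n" "gam v0 = 0" using P0 by blast
  have A: "\<And>t. gam ((v0 + t) mod n) = 0"
  proof -
    fix t show "gam ((v0 + t) mod n) = 0"
    proof (induction t)
      case 0 then show ?case using v0 by simp
    next
      case (Suc t)
      have "sv ((v0 + t) mod n) = (v0 + Suc t) mod n" by (simp add: suc_v_def mod_Suc_eq)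
      then show ?case using step[of "(v0 + t) mod n"] Suc n_pos by simp
    qed
  qed
  show ?thesis
  proof (intro allI impI)
    fix i assume i: "i < n"
    have "(v0 + (i + n - v0)) mod n = i" using i v0 by simp
    then show "gam i = 0" using A[of "i + n - v0"] by simp
  qed
qed

lemma CC1: "CC 0 = 1"
proof (rule ccontr)
  assume C: "CC 0 \<noteq> 1"
  have Ci: "CC i \<noteq> 1" if ii: "i < n" for i
  proof -
    have "CC i = CC 0" by (rule CC_const[OF ii])
    then show ?thesis using C by simp
  qed
  have lm: "lam = -1" by (rule lam_m1)
  have K0: "\<forall>k<n. g k = sv k \<longrightarrow> cA k = 0 \<and> cS k = 0 \<and> gam k = 0"
  proof (intro allI impI)
    fix k assume k: "k < n" and gk: "g k = sv k"
    note kf = k_facts[OF k gk]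
    have e1: "cA k = - (\<mu> k * cS k)" using eqk1[OF k gk] lm by simp
    have e2: "cS k = - (\<mu>s k * cA k)" using eqk2[OF k gk] lm by simp
    have "cA k = CC k * cA k" using e1 e2 by (simp add: CC_def algebra_simps)
    then have "(1 - CC k) * cA k = 0" by (simp add: algebra_simps)
    then have c0: "cA k = 0" using Ci[OF k] by simp
    have "gam (sv k) ^ 2 = \<mu> k * \<mu>s (g (sv k)) * gam k ^ 2"
      by (rule X2a[OF lm XX k]) (use kf gk in auto)
    moreover have "gam (sv k) = - gam k" using gam_rel(2)[OF k] lm gk by simp
    ultimately have "gam k ^ 2 = CC k * gam k ^ 2" using kf by (simp add: CC_def)
    then have "(1 - CC k) * gam k ^ 2 = 0" by (simp add: algebra_simps)
    then have "gam k = 0" using Ci[OF k] by simp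
    then show "cA k = 0 \<and> cS k = 0 \<and> gam k = 0" using c0 e2 by simp
  qed
  have F0: "\<forall>j<n. g j = j \<longrightarrow> bA (pv j) = 0 \<and> dA j = 0 \<and> bS (pv j) = 0 \<and> dS j = 0 \<and> gam (pv j) = 0"
  proof (intro allI impI)
    fix j assume j: "j < n" and gj: "g j = j"
    note f = fix_facts[OF j gj]
    let ?p = "pv j"
    have a2: "dS j = - bA ?p" using eqf2[OF j gj] lm by simp
    have a4: "bS ?p * \<mu> j = - (\<mu>s ?p * dA j)" using eqf4[OF j gj] lm by simp
    have o1: "dA j + \<mu> j * dS j = 0" by (rule om_f1[OF j gj])
    have o2: "bA ?p - \<mu>s j * dA j + (\<mu> ?p * bS ?p - dS j) = 0" by (rule om_f2[OF j gj])
    have dA: "dA j = \<mu> j * bA ?p" using o1 a2 by (simp add: algebra_simps add_eq_0_iff)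
    have mj: "\<mu> j \<noteq> 0" by (rule mu_nz'(1)[OF j])
    have bS: "\<mu> ?p * bS ?p = - (CC ?p * bA ?p)"
    proof -
      have "\<mu> j * (\<mu> ?p * bS ?p) = \<mu> ?p * (bS ?p * \<mu> j)" by (simp add: algebra_simps)
      also have "\<dots> = - (\<mu> ?p * \<mu>s ?p * dA j)" using a4 by simp
      also have "\<dots> = \<mu> j * (- (CC ?p * bA ?p))" using dA by (simp add: CC_def algebra_simps)
      finally have "\<mu> j * (\<mu> ?p * bS ?p) = \<mu> j * (- (CC ?p * bA ?p))" .
      then show ?thesis using mult_left_cancel[OF mj] by blast
    qed
    have "bA ?p - CC j * bA ?p - CC ?p * bA ?p + bA ?p = 0"
      using o2 a2 dA bS by (simp add: CC_def algebra_simps)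
    moreover have "CC j = CC 0" by (rule CC_const[OF j])
    moreover have "CC ?p = CC 0" by (rule CC_const[OF f(7)])
    ultimately have "2 * ((1 - CC 0) * bA ?p) = 0" by (simp add: algebra_simps)
    then have b0: "bA ?p = 0" using two_nz C by simp
    have d0: "dA j = 0" using dA b0 by simp
    have "bS ?p = 0" using bS b0 mu_nz'(1)[OF f(7)] by simp
    moreover have "gam ?p = 0"
    proof -
      have "bA ?p ^ 2 = gam ?p ^ 2 * \<mu> ?p * \<mu>s j" by (rule X2f[OF lm XX j gj])
      then have "gam ?p ^ 2 * \<mu> ?p * \<mu>s j = 0" using b0 by simp
      then show ?thesis using mu_nz'[OF f(7)] mu_nz'[OF j] by simp
    qed
    ultimately show "bA ?p = 0 \<and> dA j = 0 \<and> bS ?p = 0 \<and> dS j = 0 \<and> gam ?p = 0" using b0 d0 a2 by simp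
  qed
  have G0: "\<forall>i<n. gam i = 0"
  proof (rule gam_chain)
    obtain v0 where v0: "v0 < n" "g v0 = v0 \<or> g v0 = sv v0" using special_exists[OF n_pos] by blast
    then have "gam v0 = 0" using gam_fix K0 by blast
    then show "\<exists>v0<n. gam v0 = 0" using v0 by blast
  next
    fix i assume i: "i < n" and gi: "gam i = 0"
    have si: "sv i < n" by (simp add: sv_lt n_pos)
    show "gam (sv i) = 0"
    proof (cases "g (sv i) = sv i")
      case True then show ?thesis using gam_fix[OF si] by simp
    next
      case ns: False
      show ?thesis
      proof (cases "g i = i")
        case True
        note f = fix_facts[OF i True]
        have "gam (pv i) = 0" using F0 i True by blast
        moreover have "gam (g (pv i)) = lam * gam (pv i)" by (rule gam_rel(2)[OF f(7)])
        ultimately show ?thesis using f by simp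
      next
        case False
        have "gam (sv i) ^ 2 = \<mu> i * \<mu>s (g (sv i)) * gam i ^ 2" by (rule X2a[OF lm XX i False ns])
        then show ?thesis using gi by simp
      qed
    qed
  qed
  show False using gens_zero_False zero_gens[OF G0] K0 F0 by blast
qed

lemma mus_inv: "i < n \<Longrightarrow> \<mu>s i = inverse (\<mu> i)"
proof -
  assume i: "i < n"
  have "CC i = CC 0" by (rule CC_const[OF i])
  then have "CC i = 1" using CC1 by simp
  then have "\<mu> i * \<mu>s i = 1" by (simp add: CC_def)
  then show ?thesis using mu_nz'(1)[OF i] by (simp add: field_simps)
qed

end


context TS begin

lemma psc_psc: "psc a (psc b f) = psc (a * b) f" by (rule ext) (simp add: psc_app)

lemma G2_av: assumes i: "i < n" shows "G (G (av n i)) = psc (\<mu> i * \<mu>s (g (sv i))) (av n i)"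
proof -
  let ?q = "g (sv i)"
  have q: "?q < n" by (simp add: g_lt n_pos)
  have sq: "sv ?q = g i" using i by (simp add: g_sv sv_pv g_lt n_pos)
  have gsq: "g (sv ?q) = i" using sq i by (simp add: g_g)
  have "G (G (av n i)) = G (psc (\<mu> i) (asv n ?q))" using Gav[OF i] by simp
  also have "\<dots> = psc (\<mu> i) (G (asv n ?q))" by (rule Gsc) (simp add: asv_PA q)
  also have "\<dots> = psc (\<mu> i) (psc (\<mu>s ?q) (av n i))" using Gasv[OF q] gsq by simp
  finally show ?thesis by (simp add: psc_psc)
qed

lemma Gpow_av: assumes i: "i < n" shows "(G ^^ (2 * k)) (av n i) = psc ((\<mu> i * \<mu>s (g (sv i))) ^ k) (av n i)"
proof (induction k)
  case 0 then show ?case by (rule ext) (simp add: psc_app)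
next
  case (Suc k)
  let ?c = "\<mu> i * \<mu>s (g (sv i))"
  have "(G ^^ (2 * Suc k)) (av n i) = G (G ((G ^^ (2 * k)) (av n i)))"
    by (simp add: numeral_2_eq_2)
  also have "\<dots> = G (G (psc (?c ^ k) (av n i)))" using Suc.IH by simp
  also have "G (psc (?c ^ k) (av n i)) = psc (?c ^ k) (G (av n i))" by (rule Gsc) (simp add: av_PA i)
  also have "G (psc (?c ^ k) (G (av n i))) = psc (?c ^ k) (G (G (av n i)))" by (rule Gsc) (simp add: GPA av_PA i)
  also have "\<dots> = psc (?c ^ Suc k) (av n i)" using G2_av[OF i] by (simp add: psc_psc algebra_simps)
  finally show ?case .
qed

lemma mpow: assumes i: "i < n" shows "(\<mu> i * inverse (\<mu> (grefl n d (i + 1)))) ^ (m div 2) = 1"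
proof -
  have "2 dvd m" using r_dvd_m r2 by simp
  then have m2: "m = 2 * (m div 2)" by simp
  have "(G ^^ m) (av n i) = av n i" by (rule Gm[OF av_PA[OF i]])
  then have "psc ((\<mu> i * \<mu>s (g (sv i))) ^ (m div 2)) (av n i) = av n i"
    using Gpow_av[OF i, of "m div 2"] m2 by simp
  then have "(\<mu> i * \<mu>s (g (sv i))) ^ (m div 2) * av n i (i, [Arr i]) = av n i (i, [Arr i])"
    by (metis psc_app)
  then have "(\<mu> i * \<mu>s (g (sv i))) ^ (m div 2) = 1" by (simp add: arrv_app)
  then show ?thesis using mus_inv[OF g_lt[OF n_pos]] i by (simp add: g_Suc)
qed

lemma fix_rel: assumes j: "j < n" and gj: "g j = j"
  shows "bA (pv j) = inverse (\<mu> j) * dA j" "dS j = - (inverse (\<mu> j) * dA j)"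
    "bS (pv j) = - (inverse (\<mu> j * \<mu> (pv j)) * dA j)"
    "dA j ^ 2 = \<mu> j * \<mu> (pv j) * gam (pv j) ^ 2"
proof -
  note f = fix_facts[OF j gj]
  let ?p = "pv j"
  have lm: "lam = -1" by (rule lam_m1)
  have mj: "\<mu> j \<noteq> 0" and mp: "\<mu> ?p \<noteq> 0" using mu_nz'(1)[OF j] mu_nz'(1)[OF f(7)] by auto
  have a2: "dS j = - bA ?p" using eqf2[OF j gj] lm by simp
  have a4: "bS ?p * \<mu> j = - (\<mu>s ?p * dA j)" using eqf4[OF j gj] lm by simp
  have o1: "dA j + \<mu> j * dS j = 0" by (rule om_f1[OF j gj])
  have dA: "dA j = \<mu> j * bA ?p" using o1 a2 by (simp add: algebra_simps add_eq_0_iff)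
  show b: "bA ?p = inverse (\<mu> j) * dA j" using dA mj by simp
  show "dS j = - (inverse (\<mu> j) * dA j)" using a2 b by simp
  show "bS ?p = - (inverse (\<mu> j * \<mu> ?p) * dA j)"
    using a4 mus_inv[OF f(7)] mj mp by (simp add: field_simps)
  have x2: "bA ?p ^ 2 = gam ?p ^ 2 * \<mu> ?p * \<mu>s j" by (rule X2f[OF lm XX j gj])
  show "dA j ^ 2 = \<mu> j * \<mu> ?p * gam ?p ^ 2"
    using x2 dA mus_inv[OF j] mj by (simp add: power2_eq_square field_simps)
qed

lemma k_rel: assumes k: "k < n" and gk: "g k = sv k"
  shows "cS k = - (inverse (\<mu> k) * cA k)"
  using eqk2[OF k gk] lam_m1 mus_inv[OF k] by simp

lemma sig_zero_A: "i < n \<Longrightarrow> cA i = 0 \<Longrightarrow> bA i = 0 \<Longrightarrow> dA i = 0 \<Longrightarrow> sig (Arr i) = pzero"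
  by (rule ext, case_tac x) (simp add: sigA pzero_app)
lemma sig_zero_S: "i < n \<Longrightarrow> cS i = 0 \<Longrightarrow> bS i = 0 \<Longrightarrow> dS i = 0 \<Longrightarrow> sig (Star i) = pzero"
  by (rule ext, case_tac x) (simp add: sigS pzero_app)

end


context TS begin

lemma gg_m: "i < n \<Longrightarrow> gam (g i) = - gam i" using gam_rel(2)[of i] lam_m1 by simp

lemma C0: "\<forall>i<n. X (ev i) = padd (psc (gam i) (ev i)) (psc (- (gam i * inverse lam)) (ev (grefl n d i)))"
proof (intro allI impI)
  fix i assume i: "i < n"
  show "X (ev i) = padd (psc (gam i) (ev i)) (psc (- (gam i * inverse lam)) (ev (g i)))"
    using Xev_form[OF i] gam_gi_inv[OF i] by simp
qed

lemma C1: "\<forall>i<n. X (ev i) = psc (gam i) (padd (ev i) (ev (grefl n d i)))"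
proof (intro allI impI)
  fix i assume i: "i < n"
  show "X (ev i) = psc (gam i) (padd (ev i) (ev (g i)))"
    by (rule ext, case_tac x) (simp add: Xev_form[OF i] gg_m[OF i] padd_app psc_app algebra_simps)
qed

lemma C2: "\<forall>i<n. gam i = - gam (grefl n d i)"
  using gg_m by simp

lemma C3: "\<forall>j<n. grefl n d j = j \<longrightarrow> gam j = 0"
  using gam_fix by blast

lemma C4: "\<forall>i<n. grefl n d i \<noteq> i \<and> grefl n d (suc_v n i) \<noteq> suc_v n i \<longrightarrow>
              gam (suc_v n i) ^ 2 = \<mu> i * inverse (\<mu> (grefl n d (i + 1))) * gam i ^ 2"
proof (intro allI impI)
  fix i assume i: "i < n" and h: "g i \<noteq> i \<and> g (sv i) \<noteq> sv i"
  have "gam (sv i) ^ 2 = \<mu> i * \<mu>s (g (sv i)) * gam i ^ 2" using X2a[OF lam_m1 XX i] h by blast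
  then show "gam (sv i) ^ 2 = \<mu> i * inverse (\<mu> (g (i + 1))) * gam i ^ 2"
    using mus_inv[OF g_lt[OF n_pos]] i by (simp add: g_Suc)
qed

lemma C5: "\<forall>i<n. X (av n i) = padd (padd (psc (gam (suc_v n i)) (av n i))
                                       (psc (gam i * \<mu> i) (asv n (grefl n d (i + 1)))))
                                 (qt_sigma n lam G X gam (Arr i))"
proof (intro allI impI)
  fix i assume i: "i < n"
  show "X (av n i) = padd (padd (psc (gam (sv i)) (av n i)) (psc (gam i * \<mu> i) (asv n (g (i + 1))))) (sig (Arr i))"
    by (rule ext, case_tac x) (simp add: qt_sigma_def Gav[OF i] g_Suc[OF i] lam_m1 padd_app psc_app algebra_simps)
qed

lemma C6: "\<forall>i<n. X (asv n i) = padd (padd (psc (gam i) (asv n i))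
                                       (psc (gam (suc_v n i) * inverse (\<mu> i)) (av n (grefl n d (i + 1)))))
                                 (qt_sigma n lam G X gam (Star i))"
proof (intro allI impI)
  fix i assume i: "i < n"
  show "X (asv n i) = padd (padd (psc (gam i) (asv n i)) (psc (gam (sv i) * inverse (\<mu> i)) (av n (g (i + 1))))) (sig (Star i))"
    by (rule ext, case_tac x) (simp add: qt_sigma_def Gasv[OF i] g_Suc[OF i] lam_m1 mus_inv[OF i] padd_app psc_app algebra_simps)
qed

lemma C7: "\<forall>j<n. grefl n d j = j \<longrightarrow>
          (\<exists>c. c ^ 2 = \<mu> j * \<mu> (pre_v n j) * gam (pre_v n j) ^ 2 \<and>
               qt_sigma n lam G X gam (Arr (pre_v n j)) = psc (inverse (\<mu> j) * c) (av n (pre_v n j)) \<and>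
               qt_sigma n lam G X gam (Arr j) = psc c (asv n (pre_v n j)) \<and>
               qt_sigma n lam G X gam (Star (pre_v n j)) = psc (- (inverse (\<mu> j * \<mu> (pre_v n j)) * c)) (av n j) \<and>
               qt_sigma n lam G X gam (Star j) = psc (- (inverse (\<mu> j) * c)) (asv n j))"
proof (intro allI impI)
  fix j assume j: "j < n" and gj: "g j = j"
  note f = fix_facts[OF j gj] and z = fix_zero[OF j gj] and R = fix_rel[OF j gj]
  show "\<exists>c. c ^ 2 = \<mu> j * \<mu> (pv j) * gam (pv j) ^ 2 \<and>
               sig (Arr (pv j)) = psc (inverse (\<mu> j) * c) (av n (pv j)) \<and>
               sig (Arr j) = psc c (asv n (pv j)) \<and>
               sig (Star (pv j)) = psc (- (inverse (\<mu> j * \<mu> (pv j)) * c)) (av n j) \<and>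
               sig (Star j) = psc (- (inverse (\<mu> j) * c)) (asv n j)"
  proof (intro exI[of _ "dA j"] conjI)
    show "dA j ^ 2 = \<mu> j * \<mu> (pv j) * gam (pv j) ^ 2" by (rule R(4))
    show "sig (Arr (pv j)) = psc (inverse (\<mu> j) * dA j) (av n (pv j))"
      by (rule ext, case_tac x) (simp add: sigA[OF f(7)] z R psc_app)
    show "sig (Arr j) = psc (dA j) (asv n (pv j))"
      by (rule ext, case_tac x) (simp add: sigA[OF j] z psc_app)
    show "sig (Star (pv j)) = psc (- (inverse (\<mu> j * \<mu> (pv j)) * dA j)) (av n j)"
      by (rule ext, case_tac x) (simp add: sigS[OF f(7)] z R f psc_app)
    show "sig (Star j) = psc (- (inverse (\<mu> j) * dA j)) (asv n j)"
      by (rule ext, case_tac x) (simp add: sigS[OF j] z R psc_app)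
  qed
qed

lemma C8: "\<exists>c :: nat \<Rightarrow> 'k.
          (\<forall>k<n. grefl n d k = suc_v n k \<and> grefl n d (suc_v n k) = k \<longrightarrow>
              qt_sigma n lam G X gam (Arr k) = psc (c k) (ev k) \<and>
              qt_sigma n lam G X gam (Star k) = psc (- (inverse (\<mu> k) * c k)) (ev (suc_v n k))) \<and>
          ((\<forall>i<n. gam i = 0) \<longrightarrow>
              (\<exists>k<n. grefl n d k = suc_v n k \<and> grefl n d (suc_v n k) = k \<and> c k \<noteq> 0))"
proof (intro exI[of _ cA] conjI allI impI)
  fix k assume k: "k < n" and h: "g k = sv k \<and> g (sv k) = k"
  then have gk: "g k = sv k" by simp
  note z = k_zero[OF k gk]
  show "sig (Arr k) = psc (cA k) (ev k)"
    by (rule ext, case_tac x) (simp add: sigA[OF k] z psc_app)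
  show "sig (Star k) = psc (- (inverse (\<mu> k) * cA k)) (ev (sv k))"
    by (rule ext, case_tac x) (simp add: sigS[OF k] z k_rel[OF k gk] psc_app)
next
  assume G0: "\<forall>i<n. gam i = 0"
  show "\<exists>k<n. g k = sv k \<and> g (sv k) = k \<and> cA k \<noteq> 0"
  proof (rule ccontr)
    assume N: "\<not> (\<exists>k<n. g k = sv k \<and> g (sv k) = k \<and> cA k \<noteq> 0)"
    have K0: "\<forall>k<n. g k = sv k \<longrightarrow> cA k = 0 \<and> cS k = 0"
    proof (intro allI impI)
      fix k assume k: "k < n" and gk: "g k = sv k"
      have "cA k = 0" using N k gk k_facts[OF k gk] by blast
      then show "cA k = 0 \<and> cS k = 0" using k_rel[OF k gk] by simp
    qed
    have F0: "\<forall>j<n. g j = j \<longrightarrow> bA (pv j) = 0 \<and> dA j = 0 \<and> bS (pv j) = 0 \<and> dS j = 0"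
    proof (intro allI impI)
      fix j assume j: "j < n" and gj: "g j = j"
      note f = fix_facts[OF j gj] and R = fix_rel[OF j gj]
      have "dA j ^ 2 = 0" using R(4) G0 f(7) by simp
      then have "dA j = 0" by simp
      then show "bA (pv j) = 0 \<and> dA j = 0 \<and> bS (pv j) = 0 \<and> dS j = 0" using R by simp
    qed
    show False using gens_zero_False zero_gens[OF G0 K0 F0] by blast
  qed
qed

lemma C9: "\<forall>i<n. \<not> (\<exists>j<n. grefl n d j = j \<and> (i = pre_v n j \<or> i = j)) \<and> grefl n d i \<noteq> suc_v n i \<longrightarrow>
              qt_sigma n lam G X gam (Arr i) = pzero \<and> qt_sigma n lam G X gam (Star i) = pzero"
proof (intro allI impI)
  fix i assume i: "i < n" and h: "\<not> (\<exists>j<n. g j = j \<and> (i = pv j \<or> i = j)) \<and> g i \<noteq> sv i"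
  have si: "sv i < n" by (simp add: sv_lt n_pos)
  have nk: "g (sv i) \<noteq> i" using h k_iff[OF i] by simp
  have nf1: "g (sv i) \<noteq> sv i"
  proof
    assume "g (sv i) = sv i"
    then have "\<exists>j<n. g j = j \<and> (i = pv j \<or> i = j)" using si i by (intro exI[of _ "sv i"]) (simp add: pv_sv)
    then show False using h by simp
  qed
  have nf2: "g i \<noteq> i" using h i by blast
  have "cA i = 0" using cA_c[OF i] nk by blast
  moreover have "bA i = 0" using bA_c[OF i] nf1 by blast
  moreover have "dA i = 0" using dA_c[OF i] nf2 by blast
  moreover have "cS i = 0" using cS_c[OF i] h by blast
  moreover have "bS i = 0" using bS_c[OF i] nf1 by blast
  moreover have "dS i = 0" using dS_c[OF i] nf2 by blast
  ultimately show "sig (Arr i) = pzero \<and> sig (Star i) = pzero"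
    using sig_zero_A[OF i] sig_zero_S[OF i] by simp
qed

theorem main: "r = 2 \<and> lam = -1 \<and>
    (\<forall>i<n. \<mu>s i = inverse (\<mu> i)) \<and>
    (\<forall>i<n. (\<mu> i * inverse (\<mu> (grefl n d (i + 1)))) ^ (m div 2) = 1) \<and>
    (\<exists>\<gamma> :: nat \<Rightarrow> 'k.
       (\<forall>i<n. X (ev i) = padd (psc (\<gamma> i) (ev i)) (psc (- (\<gamma> i * inverse lam)) (ev (grefl n d i)))) \<and>
       (\<forall>i<n. X (ev i) = psc (\<gamma> i) (padd (ev i) (ev (grefl n d i)))) \<and>
       (\<forall>i<n. \<gamma> i = - \<gamma> (grefl n d i)) \<and>
       (\<forall>j<n. grefl n d j = j \<longrightarrow> \<gamma> j = 0) \<and>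
       (\<forall>i<n. grefl n d i \<noteq> i \<and> grefl n d (suc_v n i) \<noteq> suc_v n i \<longrightarrow>
              \<gamma> (suc_v n i) ^ 2 = \<mu> i * inverse (\<mu> (grefl n d (i + 1))) * \<gamma> i ^ 2) \<and>
       (\<forall>i<n. X (av n i) = padd (padd (psc (\<gamma> (suc_v n i)) (av n i))
                                       (psc (\<gamma> i * \<mu> i) (asv n (grefl n d (i + 1)))))
                                 (qt_sigma n lam G X \<gamma> (Arr i))) \<and>
       (\<forall>i<n. X (asv n i) = padd (padd (psc (\<gamma> i) (asv n i))
                                       (psc (\<gamma> (suc_v n i) * inverse (\<mu> i)) (av n (grefl n d (i + 1)))))
                                 (qt_sigma n lam G X \<gamma> (Star i))) \<and>
       (\<forall>j<n. grefl n d j = j \<longrightarrow>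
          (\<exists>c. c ^ 2 = \<mu> j * \<mu> (pre_v n j) * \<gamma> (pre_v n j) ^ 2 \<and>
               qt_sigma n lam G X \<gamma> (Arr (pre_v n j)) = psc (inverse (\<mu> j) * c) (av n (pre_v n j)) \<and>
               qt_sigma n lam G X \<gamma> (Arr j) = psc c (asv n (pre_v n j)) \<and>
               qt_sigma n lam G X \<gamma> (Star (pre_v n j)) = psc (- (inverse (\<mu> j * \<mu> (pre_v n j)) * c)) (av n j) \<and>
               qt_sigma n lam G X \<gamma> (Star j) = psc (- (inverse (\<mu> j) * c)) (asv n j))) \<and>
       (\<exists>c :: nat \<Rightarrow> 'k.
          (\<forall>k<n. grefl n d k = suc_v n k \<and> grefl n d (suc_v n k) = k \<longrightarrow>
              qt_sigma n lam G X \<gamma> (Arr k) = psc (c k) (ev k) \<and>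
              qt_sigma n lam G X \<gamma> (Star k) = psc (- (inverse (\<mu> k) * c k)) (ev (suc_v n k))) \<and>
          ((\<forall>i<n. \<gamma> i = 0) \<longrightarrow>
              (\<exists>k<n. grefl n d k = suc_v n k \<and> grefl n d (suc_v n k) = k \<and> c k \<noteq> 0))) \<and>
       (\<forall>i<n. \<not> (\<exists>j<n. grefl n d j = j \<and> (i = pre_v n j \<or> i = j)) \<and> grefl n d i \<noteq> suc_v n i \<longrightarrow>
              qt_sigma n lam G X \<gamma> (Arr i) = pzero \<and> qt_sigma n lam G X \<gamma> (Star i) = pzero))"
proof -
  have BODY: "(\<forall>i<n. X (ev i) = padd (psc (gam i) (ev i)) (psc (- (gam i * inverse lam)) (ev (grefl n d i)))) \<and> (\<forall>i<n. X (ev i) = psc (gam i) (padd (ev i) (ev (grefl n d i)))) \<and> (\<forall>i<n. gam i = - gam (grefl n d i)) \<and> (\<forall>j<n. grefl n d j = j \<longrightarrow> gam j = 0) \<and> (\<forall>i<n. grefl n d i \<noteq> i \<and> grefl n d (suc_v n i) \<noteq> suc_v n i \<longrightarrow>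
              gam (suc_v n i) ^ 2 = \<mu> i * inverse (\<mu> (grefl n d (i + 1))) * gam i ^ 2) \<and> (\<forall>i<n. X (av n i) = padd (padd (psc (gam (suc_v n i)) (av n i))
                                       (psc (gam i * \<mu> i) (asv n (grefl n d (i + 1)))))
                                 (qt_sigma n lam G X gam (Arr i))) \<and> (\<forall>i<n. X (asv n i) = padd (padd (psc (gam i) (asv n i))
                                       (psc (gam (suc_v n i) * inverse (\<mu> i)) (av n (grefl n d (i + 1)))))
                                 (qt_sigma n lam G X gam (Star i))) \<and> (\<forall>j<n. grefl n d j = j \<longrightarrow>
          (\<exists>c. c ^ 2 = \<mu> j * \<mu> (pre_v n j) * gam (pre_v n j) ^ 2 \<and>
               qt_sigma n lam G X gam (Arr (pre_v n j)) = psc (inverse (\<mu> j) * c) (av n (pre_v n j)) \<and>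
               qt_sigma n lam G X gam (Arr j) = psc c (asv n (pre_v n j)) \<and>
               qt_sigma n lam G X gam (Star (pre_v n j)) = psc (- (inverse (\<mu> j * \<mu> (pre_v n j)) * c)) (av n j) \<and>
               qt_sigma n lam G X gam (Star j) = psc (- (inverse (\<mu> j) * c)) (asv n j))) \<and> (\<exists>c :: nat \<Rightarrow> 'k.
          (\<forall>k<n. grefl n d k = suc_v n k \<and> grefl n d (suc_v n k) = k \<longrightarrow>
              qt_sigma n lam G X gam (Arr k) = psc (c k) (ev k) \<and>
              qt_sigma n lam G X gam (Star k) = psc (- (inverse (\<mu> k) * c k)) (ev (suc_v n k))) \<and>
          ((\<forall>i<n. gam i = 0) \<longrightarrow>
              (\<exists>k<n. grefl n d k = suc_v n k \<and> grefl n d (suc_v n k) = k \<and> c k \<noteq> 0))) \<and> (\<forall>i<n. \<not> (\<exists>j<n. grefl n d j = j \<and> (i = pre_v n j \<or> i = j)) \<and> grefl n d i \<noteq> suc_v n i \<longrightarrow>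
              qt_sigma n lam G X gam (Arr i) = pzero \<and> qt_sigma n lam G X gam (Star i) = pzero)"
    using C0 C1 C2 C3 C4 C5 C6 C7 C8 C9 by (intro conjI)
  have EX: "\<exists>\<gamma> :: nat \<Rightarrow> 'k. (\<forall>i<n. X (ev i) = padd (psc (\<gamma> i) (ev i)) (psc (- (\<gamma> i * inverse lam)) (ev (grefl n d i)))) \<and> (\<forall>i<n. X (ev i) = psc (\<gamma> i) (padd (ev i) (ev (grefl n d i)))) \<and> (\<forall>i<n. \<gamma> i = - \<gamma> (grefl n d i)) \<and> (\<forall>j<n. grefl n d j = j \<longrightarrow> \<gamma> j = 0) \<and> (\<forall>i<n. grefl n d i \<noteq> i \<and> grefl n d (suc_v n i) \<noteq> suc_v n i \<longrightarrow>
              \<gamma> (suc_v n i) ^ 2 = \<mu> i * inverse (\<mu> (grefl n d (i + 1))) * \<gamma> i ^ 2) \<and> (\<forall>i<n. X (av n i) = padd (padd (psc (\<gamma> (suc_v n i)) (av n i))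
                                       (psc (\<gamma> i * \<mu> i) (asv n (grefl n d (i + 1)))))
                                 (qt_sigma n lam G X \<gamma> (Arr i))) \<and> (\<forall>i<n. X (asv n i) = padd (padd (psc (\<gamma> i) (asv n i))
                                       (psc (\<gamma> (suc_v n i) * inverse (\<mu> i)) (av n (grefl n d (i + 1)))))
                                 (qt_sigma n lam G X \<gamma> (Star i))) \<and> (\<forall>j<n. grefl n d j = j \<longrightarrow>
          (\<exists>c. c ^ 2 = \<mu> j * \<mu> (pre_v n j) * \<gamma> (pre_v n j) ^ 2 \<and>
               qt_sigma n lam G X \<gamma> (Arr (pre_v n j)) = psc (inverse (\<mu> j) * c) (av n (pre_v n j)) \<and>
               qt_sigma n lam G X \<gamma> (Arr j) = psc c (asv n (pre_v n j)) \<and>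
               qt_sigma n lam G X \<gamma> (Star (pre_v n j)) = psc (- (inverse (\<mu> j * \<mu> (pre_v n j)) * c)) (av n j) \<and>
               qt_sigma n lam G X \<gamma> (Star j) = psc (- (inverse (\<mu> j) * c)) (asv n j))) \<and> (\<exists>c :: nat \<Rightarrow> 'k.
          (\<forall>k<n. grefl n d k = suc_v n k \<and> grefl n d (suc_v n k) = k \<longrightarrow>
              qt_sigma n lam G X \<gamma> (Arr k) = psc (c k) (ev k) \<and>
              qt_sigma n lam G X \<gamma> (Star k) = psc (- (inverse (\<mu> k) * c k)) (ev (suc_v n k))) \<and>
          ((\<forall>i<n. \<gamma> i = 0) \<longrightarrow>
              (\<exists>k<n. grefl n d k = suc_v n k \<and> grefl n d (suc_v n k) = k \<and> c k \<noteq> 0))) \<and> (\<forall>i<n. \<not> (\<exists>j<n. grefl n d j = j \<and> (i = pre_v n j \<or> i = j)) \<and> grefl n d i \<noteq> suc_v n i \<longrightarrow>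
              qt_sigma n lam G X \<gamma> (Arr i) = pzero \<and> qt_sigma n lam G X \<gamma> (Star i) = pzero)"
    by (rule exI[of _ gam]) (rule BODY)
  show ?thesis using r2 lam_m1 mus_inv mpow EX by blast
qed

end

theorem theorem3p15:
  fixes lam :: "'k::field" and r m n d :: nat
    and G X :: "'k pa \<Rightarrow> 'k pa"
    and \<mu> \<mu>s :: "nat \<Rightarrow> 'k"
  assumes r_gt1: "r > 1" and m_pos: "m > 0" and r_dvd_m: "r dvd m"
    and lam_prim: "lam ^ r = 1" "\<forall>j. 0 < j \<and> j < r \<longrightarrow> lam ^ j \<noteq> 1"
    and r_char: "of_nat r \<noteq> (0::'k)"
    and n_ge3: "n \<ge> 3"
    and action: "taft_module_algebra n lam r m G X"
    and lin: "linear_action n G X"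
    and inner: "inner_faithful n lam r m G X"
    and d_range: "0 < d" "d \<le> n - 1"
    and mu_nz: "\<forall>i<n. \<mu> i \<noteq> 0 \<and> \<mu>s i \<noteq> 0"
    and g_e: "\<forall>i<n. G (ev i) = ev (grefl n d i)"
    and g_a: "\<forall>i<n. G (av n i) = psc (\<mu> i) (asv n (grefl n d (i + 1)))"
    and g_as: "\<forall>i<n. G (asv n i) = psc (\<mu>s i) (av n (grefl n d (i + 1)))"
    and desc: "descends n G X"
  shows "r = 2 \<and> lam = -1 \<and>
    (\<forall>i<n. \<mu>s i = inverse (\<mu> i)) \<and>
    (\<forall>i<n. (\<mu> i * inverse (\<mu> (grefl n d (i + 1)))) ^ (m div 2) = 1) \<and>
    (\<exists>\<gamma> :: nat \<Rightarrow> 'k.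
       (\<forall>i<n. X (ev i) = padd (psc (\<gamma> i) (ev i)) (psc (- (\<gamma> i * inverse lam)) (ev (grefl n d i)))) \<and>
       (\<forall>i<n. X (ev i) = psc (\<gamma> i) (padd (ev i) (ev (grefl n d i)))) \<and>
       (\<forall>i<n. \<gamma> i = - \<gamma> (grefl n d i)) \<and>
       (\<forall>j<n. grefl n d j = j \<longrightarrow> \<gamma> j = 0) \<and>
       (\<forall>i<n. grefl n d i \<noteq> i \<and> grefl n d (suc_v n i) \<noteq> suc_v n i \<longrightarrow>
              \<gamma> (suc_v n i) ^ 2 = \<mu> i * inverse (\<mu> (grefl n d (i + 1))) * \<gamma> i ^ 2) \<and>
       (\<forall>i<n. X (av n i) = padd (padd (psc (\<gamma> (suc_v n i)) (av n i))
                                       (psc (\<gamma> i * \<mu> i) (asv n (grefl n d (i + 1)))))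
                                 (qt_sigma n lam G X \<gamma> (Arr i))) \<and>
       (\<forall>i<n. X (asv n i) = padd (padd (psc (\<gamma> i) (asv n i))
                                       (psc (\<gamma> (suc_v n i) * inverse (\<mu> i)) (av n (grefl n d (i + 1)))))
                                 (qt_sigma n lam G X \<gamma> (Star i))) \<and>
       (\<forall>j<n. grefl n d j = j \<longrightarrow>
          (\<exists>c. c ^ 2 = \<mu> j * \<mu> (pre_v n j) * \<gamma> (pre_v n j) ^ 2 \<and>
               qt_sigma n lam G X \<gamma> (Arr (pre_v n j)) = psc (inverse (\<mu> j) * c) (av n (pre_v n j)) \<and>
               qt_sigma n lam G X \<gamma> (Arr j) = psc c (asv n (pre_v n j)) \<and>
               qt_sigma n lam G X \<gamma> (Star (pre_v n j)) = psc (- (inverse (\<mu> j * \<mu> (pre_v n j)) * c)) (av n j) \<and>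
               qt_sigma n lam G X \<gamma> (Star j) = psc (- (inverse (\<mu> j) * c)) (asv n j))) \<and>
       (\<exists>c :: nat \<Rightarrow> 'k.
          (\<forall>k<n. grefl n d k = suc_v n k \<and> grefl n d (suc_v n k) = k \<longrightarrow>
              qt_sigma n lam G X \<gamma> (Arr k) = psc (c k) (ev k) \<and>
              qt_sigma n lam G X \<gamma> (Star k) = psc (- (inverse (\<mu> k) * c k)) (ev (suc_v n k))) \<and>
          ((\<forall>i<n. \<gamma> i = 0) \<longrightarrow>
              (\<exists>k<n. grefl n d k = suc_v n k \<and> grefl n d (suc_v n k) = k \<and> c k \<noteq> 0))) \<and>
       (\<forall>i<n. \<not> (\<exists>j<n. grefl n d j = j \<and> (i = pre_v n j \<or> i = j)) \<and> grefl n d i \<noteq> suc_v n i \<longrightarrow>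
              qt_sigma n lam G X \<gamma> (Arr i) = pzero \<and> qt_sigma n lam G X \<gamma> (Star i) = pzero))"
proof -
  interpret TS lam r m n d G X \<mu> \<mu>s
    by (rule TS.intro) (rule assms)+
  show ?thesis by (rule main)
qed

end
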